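(* Let $h\in\mathfrak M$ and $\delta\in\{\ast,0,\gamma^{(H)}\}$ with $t\in\mathbb T_\delta$. Let $\mathcal A_h\oplus\mathcal A_{\mu(h)}$ be a non-degenerate $\mathcal K_h\oplus\mathcal K_{\mu(h)}$-submodule of $\mathcal J_h\oplus\mathcal J_{\mu(h)}$, where $\mathcal A_h$ is a $\mathcal K_h$-subspace of $\mathcal J_h$ of dimension $\ell$ and $\mathcal A_{\mu(h)}$ is a $\mathcal K_{\mu(h)}$-subspace of $\mathcal J_{\mu(h)}$ of dimension $r$. Then: (a) if $\ell=1$ or $r=1$, there is no non-trivial isotropic element in $\mathcal A_h\oplus\mathcal A_{\mu(h)}$; (b) if $\ell,r\ge2$, there exists a non-trivial isotropic element in $\mathcal A_h\oplus\mathcal A_{\mu(h)}$; (c) if $\ell,r\ge2$, there exists a hyperbolic pair in $\mathcal A_h\oplus\mathcal A_{\mu(h)}$; (d) the $\mathcal K_h\oplus\mathcal K_{\mu(h)}$-submodule of $\mathcal A_h\oplus\mathcal A_{\mu(h)}$ generated by any hyperbolic pair is non-degenerate.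
   Context: Standing setup. Let $q$ be a power of a prime $p$, $n\ge1$ with $\gcd(n,q)=1$, $t\ge2$. $\mathcal R_n^{(q)}=\mathbb F_q[X]/\langle X^n-1\rangle\subseteq\mathcal R_n^{(q^t)}=\mathbb F_{q^t}[X]/\langle X^n-1\rangle$. $C^{(q)}_\ell=\{\ell q^j\bmod n\}$; $\ell_0=0,\dots,\ell_{s-1}$ representatives of the $q$-cyclotomic cosets mod $n$; $d_i=|C^{(q)}_{\ell_i}|$; $f_i(X)=\prod_{k\in C^{(q)}_{\ell_i}}(X-\eta^k)$ for a primitive $n$th root of unity $\eta$. $\mathcal K_i$ is the ideal of $\mathcal R_n^{(q)}$ generated by $(X^n-1)/f_i$ (a field $\cong\mathbb F_{q^{d_i}}$), $\mathcal J_i$ the ideal of $\mathcal R_n^{(q^t)}$ generated by $(X^n-1)/f_i$ (a $t$-dimensional $\mathcal K_i$-space). $\mu$ is the involution of $\{0,\dots,s-1\}$ with $C^{(q)}_{-\ell_i}=C^{(q)}_{\ell_{\mu(i)}}$, and $\mathfrak M$ contains exactly one element of each 2-cycle of $\mu$ (so $d_h=d_{\mu(h)}$). $\tau_{q^u,v}(\sum a_iX^i)=\sum a_i^{q^u}X^{vi}$. Forms: $[a,b]_0=\sum_{w=0}^{t-1}\tau_{q^w,1}(a\tau_{1,-1}(b))$ (any $t\ge2$); $[a,b]_\ast=\sum_{u=0}^{t-1}\tau_{q^u,1}(a\sum_{w=1}^{t-1}\tau_{q^w,-1}(b))$ ($t\not\equiv1\pmod p$); for $t$ even, $t=2^em$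 ($m$ odd), nonzero $\gamma\in\mathbb F_{q^{2^e}}$ with $\gamma+\gamma^{q^{2^{e-1}}}=0$, $[a,b]_\gamma=\sum_{w=0}^{t-1}\tau_{q^w,1}(\gamma a\tau_{q^{t/2},-1}(b))$. $\mathbb T_\ast=\{t\ge2:t\not\equiv1\pmod p\}$, $\mathbb T_0=\{t\ge2\}$, $\mathbb T_{\gamma^{(H)}}=\{t\ge2\text{ even}\}$. Module setup. Fix $h\in\mathfrak M$. $\mathcal J_h\oplus\mathcal J_{\mu(h)}$ is a module over the ring $\mathcal K_h\oplus\mathcal K_{\mu(h)}$ via $(u+v)(a+b)=ua+vb$. For $\delta\in\{\ast,0\}$ use $[\cdot,\cdot]_\delta$ restricted to $\mathcal J_h\oplus\mathcal J_{\mu(h)}$; for $\delta=\gamma^{(H)}$ fix $0\ne\vartheta\in\mathcal K_h$, set $\chi=\vartheta-\tau_{1,-1}(\vartheta)$ and $[x,y]_{\gamma^{(H)}}=\chi[x,y]_\gamma$. For a $\mathcal K_h$-subspace $\mathcal A_h\subseteq\mathcal J_h$ and a $\mathcal K_{\mu(h)}$-subspace $\mathcal A_{\mu(h)}\subseteq\mathcal J_{\mu(h)}$, the submodule $\mathcal A_h\oplus\mathcal A_{\mu(h)}$ (or any submodule) is non-degenerate if no nonzero element of it is $[\cdot,\cdot]_\delta$-orthogonal to all of it. A nonzero element $x$ is isotropic if $[x,x]_\delta=0$; an element $a+b$ ($a\in\mathcal J_h$, $b\in\mathcal J_{\mu(h)}$) is non-trivial if $a\ne0$ and $b\ne0$.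 Two non-trivial isotropic elements $x,y$ form a hyperbolic pair if $[x,y]_\delta=e_h+e_{\mu(h)}$, where $e_h,e_{\mu(h)}$ are the identities of $\mathcal K_h,\mathcal K_{\mu(h)}$. *)

theory Defs
  imports "HOL-Computational_Algebra.Computational_Algebra"
begin

text \<open>All fields are realised as subfields of one ambient finite field 'a,
which is large enough to contain F_(q^t) and a primitive n-th root of unity.\<close>

text \<open>The subfield of 'a of order m (when it exists): fixed points of x -> x^m.\<close>
definition subF :: "nat \<Rightarrow> ('a::{field,finite}) set" where
  "subF m = {x. x ^ m = x}"

definition xn1 :: "nat \<Rightarrow> ('a::field) poly" where
  "xn1 n = monom 1 n - 1"

text \<open>R_n over the subfield S: polynomials of degree < n with coefficients in S,
  i.e. canonical representatives of S[X]/(X^n-1).\<close>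
definition Rn :: "('a::field) set \<Rightarrow> nat \<Rightarrow> 'a poly set" where
  "Rn S n = {a. degree a < n \<and> (\<forall>i. coeff a i \<in> S)}"

definition rmul :: "nat \<Rightarrow> ('a::field) poly \<Rightarrow> 'a poly \<Rightarrow> 'a poly" where
  "rmul n a b = (a * b) mod xn1 n"

text \<open>tau_(e,v)(sum a_i X^i) = sum a_i^e X^(v i mod n); e is the exponent q^u.\<close>
definition tau :: "nat \<Rightarrow> nat \<Rightarrow> int \<Rightarrow> ('a::field) poly \<Rightarrow> 'a poly" where
  "tau n e v a = (\<Sum>i<n. monom (coeff a i ^ e) (nat ((v * int i) mod int n)))"

definition cyc_coset :: "nat \<Rightarrow> nat \<Rightarrow> nat \<Rightarrow> nat set" where
  "cyc_coset n q l = {(l * q ^ j) mod n | j. True}"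

definition negmod :: "nat \<Rightarrow> nat \<Rightarrow> nat" where
  "negmod n l = (n - l mod n) mod n"

definition fpoly :: "('a::field) \<Rightarrow> nat set \<Rightarrow> 'a poly" where
  "fpoly \<eta> C = (\<Prod>k\<in>C. [:- (\<eta> ^ k), 1:])"

definition primitive_root :: "nat \<Rightarrow> ('a::field) \<Rightarrow> bool" where
  "primitive_root n \<eta> \<longleftrightarrow> \<eta> ^ n = 1 \<and> (\<forall>k. 0 < k \<and> k < n \<longrightarrow> \<eta> ^ k \<noteq> 1)"

definition gen_ideal :: "('a::field) set \<Rightarrow> nat \<Rightarrow> 'a poly \<Rightarrow> 'a poly set" where
  "gen_ideal S n g = {rmul n g a | a. a \<in> Rn S n}"

definition ident :: "nat \<Rightarrow> ('a::field) poly set \<Rightarrow> 'a poly" where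
  "ident n K = (THE e. e \<in> K \<and> (\<forall>u\<in>K. rmul n e u = u))"

definition ksubspace :: "nat \<Rightarrow> ('a::field) poly set \<Rightarrow> 'a poly set \<Rightarrow> 'a poly set \<Rightarrow> bool" where
  "ksubspace n K J A \<longleftrightarrow> A \<subseteq> J \<and> 0 \<in> A \<and> (\<forall>x\<in>A. \<forall>y\<in>A. x + y \<in> A)
     \<and> (\<forall>u\<in>K. \<forall>x\<in>A. rmul n u x \<in> A)"

definition kdim :: "nat \<Rightarrow> ('a::field) poly set \<Rightarrow> 'a poly set \<Rightarrow> nat \<Rightarrow> bool" where
  "kdim n K A d \<longleftrightarrow> (\<exists>b. (\<forall>i<d. b i \<in> A)
     \<and> (\<forall>c. (\<forall>i<d. c i \<in> K) \<longrightarrow> (\<Sum>i<d. rmul n (c i) (b i)) = 0 \<longrightarrow> (\<forall>i<d. c i = 0))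
     \<and> A = {(\<Sum>i<d. rmul n (c i) (b i)) | c. \<forall>i<d. c i \<in> K})"

definition form0 :: "nat \<Rightarrow> nat \<Rightarrow> nat \<Rightarrow> ('a::field) poly \<Rightarrow> 'a poly \<Rightarrow> 'a poly" where
  "form0 n q t a b = (\<Sum>w<t. tau n (q ^ w) 1 (rmul n a (tau n 1 (-1) b)))"

definition form_star :: "nat \<Rightarrow> nat \<Rightarrow> nat \<Rightarrow> ('a::field) poly \<Rightarrow> 'a poly \<Rightarrow> 'a poly" where
  "form_star n q t a b =
     (\<Sum>u<t. tau n (q ^ u) 1 (rmul n a (\<Sum>w\<in>{1..<t}. tau n (q ^ w) (-1) b)))"

definition form_gamma :: "nat \<Rightarrow> nat \<Rightarrow> nat \<Rightarrow> 'a \<Rightarrow> ('a::field) poly \<Rightarrow> 'a poly \<Rightarrow> 'a poly" where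
  "form_gamma n q t \<gamma> a b =
     (\<Sum>w<t. tau n (q ^ w) 1 (rmul n (smult \<gamma> a) (tau n (q ^ (t div 2)) (-1) b)))"

definition form_gammaH :: "nat \<Rightarrow> nat \<Rightarrow> nat \<Rightarrow> 'a \<Rightarrow> ('a::field) poly \<Rightarrow> 'a poly \<Rightarrow> 'a poly \<Rightarrow> 'a poly" where
  "form_gammaH n q t \<gamma> \<theta> a b = rmul n (\<theta> - tau n 1 (-1) \<theta>) (form_gamma n q t \<gamma> a b)"

datatype delta = DStar | DZero | DGammaH

definition form_delta :: "delta \<Rightarrow> nat \<Rightarrow> nat \<Rightarrow> nat \<Rightarrow> 'a \<Rightarrow> ('a::field) poly \<Rightarrow> 'a poly \<Rightarrow> 'a poly \<Rightarrow> 'a poly" where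
  "form_delta \<delta> n q t \<gamma> \<theta> = (case \<delta> of DStar \<Rightarrow> form_star n q t | DZero \<Rightarrow> form0 n q t
      | DGammaH \<Rightarrow> form_gammaH n q t \<gamma> \<theta>)"

text \<open>the sets T_delta (p the characteristic)\<close>
definition Tset :: "delta \<Rightarrow> nat \<Rightarrow> nat set" where
  "Tset \<delta> p = (case \<delta> of DStar \<Rightarrow> {t. t \<ge> 2 \<and> t mod p \<noteq> 1 mod p} | DZero \<Rightarrow> {t. t \<ge> 2}
      | DGammaH \<Rightarrow> {t. t \<ge> 2 \<and> even t})"

definition nondeg :: "('a poly \<Rightarrow> 'a poly \<Rightarrow> ('a::field) poly) \<Rightarrow> 'a poly set \<Rightarrow> bool" where
  "nondeg B N \<longleftrightarrow> (\<forall>x\<in>N. x \<noteq> 0 \<longrightarrow> (\<exists>y\<in>N. B x y \<noteq> 0))"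

definition isotropic :: "('a poly \<Rightarrow> 'a poly \<Rightarrow> ('a::field) poly) \<Rightarrow> 'a poly \<Rightarrow> bool" where
  "isotropic B x \<longleftrightarrow> x \<noteq> 0 \<and> B x x = 0"

definition nontrivial :: "('a::field) poly set \<Rightarrow> 'a poly set \<Rightarrow> 'a poly \<Rightarrow> bool" where
  "nontrivial A1 A2 x \<longleftrightarrow> (\<exists>a\<in>A1. \<exists>b\<in>A2. x = a + b \<and> a \<noteq> 0 \<and> b \<noteq> 0)"

definition dsum :: "('a::field) poly set \<Rightarrow> 'a poly set \<Rightarrow> 'a poly set" where
  "dsum A1 A2 = {a + b | a b. a \<in> A1 \<and> b \<in> A2}"

definition hyperbolic_pair ::
  "nat \<Rightarrow> ('a poly \<Rightarrow> 'a poly \<Rightarrow> ('a::field) poly) \<Rightarrow> 'a poly set \<Rightarrow> 'a poly set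
     \<Rightarrow> 'a poly set \<Rightarrow> 'a poly set \<Rightarrow> 'a poly \<Rightarrow> 'a poly \<Rightarrow> bool" where
  "hyperbolic_pair n B K1 K2 A1 A2 x y \<longleftrightarrow>
     nontrivial A1 A2 x \<and> isotropic B x \<and> nontrivial A1 A2 y \<and> isotropic B y
     \<and> B x y = ident n K1 + ident n K2"

definition gen_submod :: "nat \<Rightarrow> ('a::field) poly set \<Rightarrow> 'a poly set \<Rightarrow> 'a poly \<Rightarrow> 'a poly \<Rightarrow> 'a poly set" where
  "gen_submod n K1 K2 x y = {rmul n (u + v) x + rmul n (u' + v') y | u v u' v'.
       u \<in> K1 \<and> v \<in> K2 \<and> u' \<in> K1 \<and> v' \<in> K2}"

definition Kideal :: "('a::{field,finite}) \<Rightarrow> nat \<Rightarrow> nat \<Rightarrow> nat \<Rightarrow> 'a poly set" where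
  "Kideal \<eta> n q l = gen_ideal (subF q) n (xn1 n div fpoly \<eta> (cyc_coset n q l))"

definition Jideal :: "('a::{field,finite}) \<Rightarrow> nat \<Rightarrow> nat \<Rightarrow> nat \<Rightarrow> nat \<Rightarrow> 'a poly set" where
  "Jideal \<eta> n q t l = gen_ideal (subF (q ^ t)) n (xn1 n div fpoly \<eta> (cyc_coset n q l))"

end

theory Submission
  imports Defs "HOL-Number_Theory.Cong"
begin


locale fsetup =
  fixes \<eta> :: "'a::{field,finite}" and p k q N n t :: nat
  assumes p: "prime p" and k: "k \<ge> 1" and q: "q = p ^ k" and N: "N \<ge> 1" and tN: "t dvd N"
    and card: "card (UNIV :: 'a set) = q ^ N" and n: "n \<ge> 1" and cop: "coprime n q"
    and t2: "t \<ge> 2" and prim: "primitive_root n \<eta>"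
begin

lemma card_zero: "of_nat (card (UNIV :: 'a set)) = (0::'a)"
proof -
  have bij: "bij_betw (\<lambda>y. 1 + y) (UNIV::'a set) UNIV"
    by (rule bij_betwI[where g="\<lambda>y. y - 1"]) auto
  have "(\<Sum>y\<in>(UNIV::'a set). 1 + y) = (\<Sum>y\<in>UNIV. y)"
    using sum.reindex_bij_betw[OF bij, of "\<lambda>y. y"] by simp
  then have "of_nat (card (UNIV::'a set)) + (\<Sum>y\<in>(UNIV::'a set). y) = (\<Sum>y\<in>UNIV. y)"
    by (simp add: sum.distrib)
  then show ?thesis by simp
qed

lemma char: "CHAR('a) = p"
proof -
  have pos: "CHAR('a) > 0" by (rule finite_imp_CHAR_pos) simp
  have pr: "prime CHAR('a)" using prime_CHAR_semidom[OF pos] .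
  have "CHAR('a) dvd card (UNIV :: 'a set)" using card_zero of_nat_eq_0_iff_char_dvd by blast
  then have "CHAR('a) dvd p ^ (k * N)" using card q by (simp add: power_mult)
  then have "CHAR('a) dvd p" using pr prime_dvd_power by blast
  then show ?thesis using pr p by (simp add: primes_dvd_imp_eq)
qed

lemma ordq: "\<exists>T\<ge>1. [q ^ T = 1] (mod n)"
proof -
  let ?f = "\<lambda>j. q ^ j mod n"
  have "?f ` {..n} \<subseteq> {..<n}" using n by auto
  then have "card (?f ` {..n}) \<le> n" using card_mono[of "{..<n}"] by fastforce
  then have "\<not> inj_on ?f {..n}" using card_image by fastforce
  then obtain a b where ab: "a \<le> n" "b \<le> n" "a \<noteq> b" "?f a = ?f b" unfolding inj_on_def by auto
  { fix a b :: nat assume "a < b" "?f a = ?f b"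
    then have "[q ^ a * q ^ (b - a) = q ^ a * 1] (mod n)"
      by (simp add: cong_def power_add[symmetric])
    moreover have "coprime (q ^ a) n" using cop by (simp add: coprime_commute)
    ultimately have "[q ^ (b - a) = 1] (mod n)" using cong_mult_lcancel_nat by blast
    then have "\<exists>T\<ge>1. [q ^ T = 1] (mod n)" using \<open>a < b\<close> by (intro exI[of _ "b - a"]) auto }
  then show ?thesis using ab by (metis linorder_neq_iff)
qed

lemma qpow: "q ^ w = CHAR('a) ^ (k * w)"
  using q char by (simp add: power_mult)

lemma fr_add: "(x + y :: 'a) ^ (q ^ w) = x ^ (q ^ w) + y ^ (q ^ w)"
  by (rule freshmans_dream') (use char p qpow in auto)

lemma fr_sum: "(sum f A :: 'a) ^ (q ^ w) = (\<Sum>i\<in>A. f i ^ (q ^ w))"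
  by (rule freshmans_dream_sum') (use char p qpow in auto)

lemma q_pos: "q > 0" using q p prime_gt_0_nat by simp

lemma fr_uminus: "(- x :: 'a) ^ (q ^ w) = - (x ^ (q ^ w))"
proof -
  have "0 = (x + - x) ^ (q ^ w)" using q_pos by simp
  also have "\<dots> = x ^ (q ^ w) + (- x) ^ (q ^ w)" by (rule fr_add)
  finally show ?thesis by (simp add: eq_neg_iff_add_eq_0 add.commute)
qed

lemma fr_diff: "(x - y :: 'a) ^ (q ^ w) = x ^ (q ^ w) - y ^ (q ^ w)"
  using fr_add[of x "- y" w] fr_uminus[of y w] by simp

lemma subF_pow_iter: "(x::'a) ^ (q ^ a) = x \<Longrightarrow> x ^ (q ^ (a * j)) = x"
proof (induction j)
  case 0 then show ?case by simp
next
  case (Suc j)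
  have "x ^ (q ^ (a * Suc j)) = (x ^ (q ^ (a * j))) ^ (q ^ a)"
    by (simp add: power_mult[symmetric] power_add[symmetric] mult.commute)
  then show ?case using Suc by simp
qed

lemma subF_mono: "x \<in> subF (q ^ a) \<Longrightarrow> a dvd b \<Longrightarrow> (x::'a) \<in> subF (q ^ b)"
  using subF_pow_iter[of x a] unfolding subF_def by (auto elim!: dvdE)

lemma subF_q: "x \<in> subF q \<Longrightarrow> (x::'a) \<in> subF (q ^ b)"
  using subF_mono[of x 1 b] by simp

lemma subF_add: "x \<in> subF (q^w) \<Longrightarrow> y \<in> subF (q^w) \<Longrightarrow> (x + y::'a) \<in> subF (q^w)"
  unfolding subF_def using fr_add by simp
lemma subF_diff: "x \<in> subF (q^w) \<Longrightarrow> y \<in> subF (q^w) \<Longrightarrow> (x - y::'a) \<in> subF (q^w)"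
  unfolding subF_def using fr_diff by simp
lemma subF_uminus: "x \<in> subF (q^w) \<Longrightarrow> (- x::'a) \<in> subF (q^w)"
  unfolding subF_def using fr_uminus by simp
lemma subF_mult: "x \<in> subF m \<Longrightarrow> y \<in> subF m \<Longrightarrow> (x * y::'a) \<in> subF m"
  unfolding subF_def by (simp add: power_mult_distrib)
lemma subF_0: "(0::'a) \<in> subF (q^w)"
  unfolding subF_def using q_pos by simp
lemma subF_1: "(1::'a) \<in> subF m"
  unfolding subF_def by simp
lemma subF_sum: "(\<And>i. i \<in> A \<Longrightarrow> f i \<in> subF (q^w)) \<Longrightarrow> (sum f A::'a) \<in> subF (q^w)"
  by (induction A rule: infinite_finite_induct) (auto intro: subF_add subF_0)
lemma subF_power: "x \<in> subF (q^w) \<Longrightarrow> (x::'a) ^ e \<in> subF (q^w)"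
proof -
  assume "x \<in> subF (q^w)"
  then have "x ^ (q^w) = x" unfolding subF_def by simp
  then have "(x ^ e) ^ (q^w) = x ^ e" by (metis power_mult mult.commute)
  then show ?thesis unfolding subF_def by simp
qed

lemma q_qpow: "q ^ 1 = q" by simp

lemma eta_n: "\<eta> ^ n = 1" using prim unfolding primitive_root_def by simp
lemma eta_nz: "\<eta> \<noteq> 0" using eta_n n by (metis one_neq_zero power_0_left not_one_le_zero)

lemma eta_powi_n: "\<eta> powi (int n) = 1" using eta_n by simp

lemma eta_powi_cong: "[a = b] (mod int n) \<Longrightarrow> \<eta> powi a = \<eta> powi b"
proof -
  assume "[a = b] (mod int n)"
  then obtain j where j: "a = b + int n * j"
    by (metis cong_iff_lin cong_sym)
  have "\<eta> powi a = \<eta> powi b * (\<eta> powi (int n)) powi j"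
    using eta_nz by (simp add: j power_int_add power_int_mult)
  then show ?thesis using eta_powi_n by simp
qed

lemma eta_powi_mod: "\<eta> powi (a mod int n) = \<eta> powi a"
  by (rule eta_powi_cong) (simp add: cong_def)

lemma eta_inj: "i < n \<Longrightarrow> j < n \<Longrightarrow> \<eta> ^ i = \<eta> ^ j \<Longrightarrow> i = j"
proof (rule ccontr)
  assume a: "i < n" "j < n" "\<eta> ^ i = \<eta> ^ j" "i \<noteq> j"
  { fix i j :: nat assume b: "i < n" "j < n" "\<eta> ^ i = \<eta> ^ j" "i < j"
    then have "\<eta> ^ i * \<eta> ^ (j - i) = \<eta> ^ i * 1"
    proof -
      have "\<eta> ^ i * \<eta> ^ (j - i) = \<eta> ^ (i + (j - i))" by (simp add: power_add)
      also have "i + (j - i) = j" using b(4) by simp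
      finally show ?thesis using b(3) by simp
    qed
    then have "\<eta> ^ (j - i) = 1" using eta_nz by simp
    moreover have "0 < j - i" "j - i < n" using b by auto
    ultimately have False using prim unfolding primitive_root_def by blast }
  then show False using a by (metis linorder_neq_iff)
qed

end

context fsetup begin

definition S :: "'a poly \<Rightarrow> int \<Rightarrow> 'a" where "S a z = poly a (\<eta> powi z)"

lemma eta_powi_pow: "(\<eta> powi a) ^ m = \<eta> powi (a * int m)"
  by (simp add: power_int_mult)

lemma eta_powi_nz: "\<eta> powi a \<noteq> 0" using eta_nz by simp

lemma deg_xn1: "degree (xn1 n :: 'a poly) = n"
proof -
  have "degree (xn1 n :: 'a poly) \<le> n" unfolding xn1_def
    by (rule degree_diff_le) (auto simp: degree_monom_le)
  moreover have "coeff (xn1 n :: 'a poly) n = 1" using n by (simp add: xn1_def coeff_monom)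
  then have "n \<le> degree (xn1 n :: 'a poly)" by (intro le_degree) simp
  ultimately show ?thesis by simp
qed

lemma xn1_nz: "(xn1 n :: 'a poly) \<noteq> 0" using deg_xn1 n by auto

lemma poly_xn1: "poly (xn1 n) x = x ^ n - 1" by (simp add: xn1_def poly_monom)

lemma xn1_root: "poly (xn1 n) (\<eta> powi z) = 0"
proof -
  have "(\<eta> powi z) ^ n = \<eta> powi (z * int n)" by (rule eta_powi_pow)
  also have "\<dots> = (\<eta> powi (int n)) powi z" by (metis mult.commute power_int_mult)
  also have "\<dots> = 1" using eta_powi_n by simp
  finally show ?thesis by (simp add: poly_xn1)
qed

lemma S_mod: "S (a mod xn1 n) z = S a z"
proof -
  have "a = (a div xn1 n) * xn1 n + a mod xn1 n" by simp
  then have "poly a (\<eta> powi z) = poly (a div xn1 n) (\<eta> powi z) * 0 + poly (a mod xn1 n) (\<eta> powi z)"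
    by (metis poly_add poly_mult xn1_root)
  then show ?thesis unfolding S_def by simp
qed

lemma S_rmul: "S (rmul n a b) z = S a z * S b z"
  unfolding rmul_def by (simp add: S_mod) (simp add: S_def)

lemma S_add: "S (a + b) z = S a z + S b z" by (simp add: S_def)
lemma S_diff: "S (a - b) z = S a z - S b z" by (simp add: S_def)
lemma S_minus: "S (- a) z = - S a z" by (simp add: S_def)
lemma S_0: "S 0 z = 0" by (simp add: S_def)
lemma S_sum: "S (sum f A) z = (\<Sum>i\<in>A. S (f i) z)" by (simp add: S_def poly_sum)
lemma S_smult: "S (smult c a) z = c * S a z" by (simp add: S_def)

lemma S_periodic: "S a (z mod int n) = S a z" by (simp add: S_def eta_powi_mod)
lemma S_cong: "[z = z'] (mod int n) \<Longrightarrow> S a z = S a z'"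
  unfolding S_def using eta_powi_cong by metis

lemma rmul_deg: "degree (rmul n a (b::'a poly)) < n"
proof -
  have "rmul n a b = 0 \<or> degree (rmul n a b) < degree (xn1 n :: 'a poly)"
    unfolding rmul_def using degree_mod_less[OF xn1_nz] by blast
  then show ?thesis using deg_xn1 n by auto
qed

lemma S_ext:
  assumes "degree a < n" "degree b < n" "\<And>z. S a z = S b z"
  shows "a = b"
proof (rule ccontr)
  assume ne: "a \<noteq> b"
  let ?d = "a - b"
  have dnz: "?d \<noteq> 0" using ne by simp
  have dd: "degree ?d < n" using assms(1,2) degree_diff_le_max[of a b] by linarith
  have sub: "(\<lambda>i. \<eta> ^ i) ` {..<n} \<subseteq> {x. poly ?d x = 0}"
  proof
    fix x assume "x \<in> (\<lambda>i. \<eta> ^ i) ` {..<n}"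
    then obtain i where x: "x = \<eta> ^ i" by auto
    have "S a (int i) = S b (int i)" by (rule assms(3))
    then show "x \<in> {x. poly ?d x = 0}" unfolding S_def x by simp
  qed
  have "inj_on (\<lambda>i. \<eta> ^ i) {..<n}" using eta_inj by (auto simp: inj_on_def)
  then have "card ((\<lambda>i. \<eta> ^ i) ` {..<n}) = n" by (simp add: card_image)
  moreover have "card ((\<lambda>i. \<eta> ^ i) ` {..<n}) \<le> card {x. poly ?d x = 0}"
    by (rule card_mono[OF poly_roots_finite[OF dnz] sub])
  moreover have "card {x. poly ?d x = 0} \<le> degree ?d" by (rule card_poly_roots_bound[OF dnz])
  ultimately show False using dd by linarith
qed

lemma poly_lt: "degree (a::'a poly) < n \<Longrightarrow> poly a x = (\<Sum>i<n. coeff a i * x ^ i)"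
proof -
  assume d: "degree a < n"
  have "poly a x = (\<Sum>i\<le>degree a. coeff a i * x ^ i)" by (rule poly_altdef)
  also have "\<dots> = (\<Sum>i<n. coeff a i * x ^ i)"
    by (rule sum.mono_neutral_left) (use d in \<open>auto simp: coeff_eq_0\<close>)
  finally show ?thesis .
qed

lemma deg_lt_I: "(\<And>j. j \<ge> n \<Longrightarrow> coeff (a::'a poly) j = 0) \<Longrightarrow> degree a < n"
proof -
  assume "\<And>j. j \<ge> n \<Longrightarrow> coeff a j = 0"
  then have "degree a \<le> n - 1" by (intro degree_le) auto
  then show ?thesis using n by linarith
qed

lemma tau_coeff: "coeff (tau n e v a) j = (\<Sum>i<n. if nat ((v * int i) mod int n) = j then coeff a i ^ e else 0)"
  unfolding tau_def by (simp add: coeff_sum coeff_monom)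

lemma tau_deg: "degree (tau n e v (a::'a poly)) < n"
proof (rule deg_lt_I)
  fix j assume j: "j \<ge> n"
  have "nat ((v * int i) mod int n) \<noteq> j" for i
  proof -
    have "(v * int i) mod int n < int n" "0 \<le> (v * int i) mod int n" using n by simp_all
    then have "nat ((v * int i) mod int n) < n" by linarith
    then show ?thesis using j by linarith
  qed
  then show "coeff (tau n e v a) j = 0" unfolding tau_coeff
    by (intro sum.neutral) auto
qed

lemma tau_add: "tau n (q ^ w) v ((a::'a poly) + b) = tau n (q ^ w) v a + tau n (q ^ w) v b"
  unfolding tau_def by (simp only: coeff_add fr_add add_monom[symmetric] sum.distrib)

lemma tau_0: "tau n (q ^ w) v 0 = (0::'a poly)" using q_pos
  unfolding tau_def by (simp add: zero_power)

lemma S_tau: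
  assumes "degree a < n"
  shows "S (tau n (q ^ w) v a) (z * int (q ^ w)) = (S a (v * z)) ^ (q ^ w)"
proof -
  let ?e = "q ^ w"
  have "S (tau n ?e v a) (z * int ?e) = (\<Sum>i<n. coeff a i ^ ?e * (\<eta> powi (z * int ?e)) ^ nat ((v * int i) mod int n))"
    unfolding S_def tau_def by (simp add: poly_sum poly_monom)
  also have "\<dots> = (\<Sum>i<n. coeff a i ^ ?e * \<eta> powi (v * z * int i * int ?e))"
  proof (rule sum.cong[OF refl])
    fix i
    have "(\<eta> powi (z * int ?e)) ^ nat ((v * int i) mod int n) = \<eta> powi (z * int ?e * ((v * int i) mod int n))"
      using n by (simp add: eta_powi_pow)
    also have "\<dots> = \<eta> powi (z * int ?e * (v * int i))"
    proof (rule eta_powi_cong)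
      have "[(v * int i) mod int n = v * int i] (mod int n)" by (simp add: cong_def)
      then show "[z * int ?e * ((v * int i) mod int n) = z * int ?e * (v * int i)] (mod int n)"
        by (rule cong_mult[OF cong_refl])
    qed
    also have "z * int ?e * (v * int i) = v * z * int i * int ?e" by (simp only: mult_ac)
    finally show "coeff a i ^ ?e * (\<eta> powi (z * int ?e)) ^ nat ((v * int i) mod int n) = coeff a i ^ ?e * \<eta> powi (v * z * int i * int ?e)" by simp
  qed
  also have "\<dots> = (\<Sum>i<n. (coeff a i * (\<eta> powi (v * z)) ^ i) ^ ?e)"
  proof (rule sum.cong[OF refl])
    fix i
    have "((\<eta> powi (v * z)) ^ i) ^ ?e = \<eta> powi (v * z * int i * int ?e)"
      by (simp only: eta_powi_pow)
    then show "coeff a i ^ ?e * \<eta> powi (v * z * int i * int ?e) = (coeff a i * (\<eta> powi (v * z)) ^ i) ^ ?e"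
      by (simp only: power_mult_distrib)
  qed
  also have "\<dots> = (\<Sum>i<n. coeff a i * (\<eta> powi (v * z)) ^ i) ^ ?e" by (simp add: fr_sum)
  also have "\<dots> = (S a (v * z)) ^ ?e" unfolding S_def using poly_lt[OF assms] by simp
  finally show ?thesis .
qed

end

context fsetup begin

definition Tq :: nat where "Tq = (SOME T. T \<ge> 1 \<and> [q ^ T = 1] (mod n))"
lemma Tq: "Tq \<ge> 1" "[q ^ Tq = 1] (mod n)"
  using someI_ex[OF ordq] unfolding Tq_def by auto

lemma Tq_int: "[int q ^ (Tq * j) = 1] (mod int n)"
proof -
  have "[q ^ (Tq * j) = 1 ^ j] (mod n)" unfolding power_mult by (rule cong_pow[OF Tq(2)])
  then have "[int (q ^ (Tq * j)) = int 1] (mod int n)" using cong_int_iff[of "q^(Tq*j)" 1 n] by simp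
  then show ?thesis by (simp only: of_nat_power of_nat_1)
qed

lemma reindex: "[z * int (q ^ (w * (Tq - 1))) * int (q ^ w) = z] (mod int n)"
proof -
  have "z * int (q ^ (w * (Tq - 1))) * int (q ^ w) = z * int q ^ (Tq * w)"
    using Tq(1) by (simp add: power_add[symmetric] algebra_simps)
  also have "[\<dots> = z * 1] (mod int n)" by (rule cong_mult[OF cong_refl Tq_int])
  finally show ?thesis by simp
qed

lemma S_ext_mult:
  assumes "degree a < n" "degree b < n" "\<And>z. S a (z * int (q ^ w)) = S b (z * int (q ^ w))"
  shows "a = b"
proof (rule S_ext[OF assms(1,2)])
  fix z
  let ?z' = "z * int (q ^ (w * (Tq - 1)))"
  have "S a z = S a (?z' * int (q ^ w))" by (rule S_cong[OF cong_sym[OF reindex]])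
  also have "\<dots> = S b (?z' * int (q ^ w))" by (rule assms(3))
  also have "\<dots> = S b z" by (rule S_cong[OF reindex])
  finally show "S a z = S b z" .
qed

lemma tau1_coeff: "coeff (tau n e 1 a) j = (if j < n then coeff (a::'a poly) j ^ e else 0)"
proof -
  have "coeff (tau n e 1 a) j = (\<Sum>i<n. if i = j then coeff a i ^ e else 0)"
  proof (unfold tau_coeff, intro sum.cong refl)
    fix i assume "i \<in> {..<n}"
    then have "nat ((1 * int i) mod int n) = i"
      by (metis lessThan_iff mod_less mult_1 nat_int of_nat_mod)
    then show "(if nat ((1 * int i) mod int n) = j then coeff a i ^ e else 0) = (if i = j then coeff a i ^ e else 0)"
      by simp
  qed
  also have "\<dots> = (if j < n then coeff a j ^ e else 0)" by (simp add: sum.delta)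
  finally show ?thesis .
qed

abbreviation inRn :: "nat \<Rightarrow> 'a poly \<Rightarrow> bool" where "inRn w a \<equiv> a \<in> Rn (subF (q ^ w)) n"

lemma inRn_deg: "inRn w a \<Longrightarrow> degree a < n" unfolding Rn_def by simp
lemma inRn_coeff: "inRn w a \<Longrightarrow> coeff a i ^ (q ^ w) = coeff a i" unfolding Rn_def subF_def by simp

lemma tau_id: "inRn w a \<Longrightarrow> tau n (q ^ w) 1 a = a"
proof (rule poly_eqI)
  fix i assume a: "inRn w a"
  show "coeff (tau n (q ^ w) 1 a) i = coeff a i"
  proof (cases "i < n")
    case True then show ?thesis by (simp add: tau1_coeff inRn_coeff[OF a])
  next
    case False then have "coeff a i = 0" using inRn_deg[OF a] by (intro coeff_eq_0) simp
    then show ?thesis using False by (simp add: tau1_coeff)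
  qed
qed

lemma frob_crit1: "inRn w a \<Longrightarrow> S a (z * int (q ^ w)) = (S a z) ^ (q ^ w)"
  using S_tau[where a=a and w=w and v=1 and z=z] tau_id[where w=w and a=a] inRn_deg[where w=w and a=a] by simp

lemma frob_crit2:
  assumes "degree a < n" "\<And>z. S a (z * int (q ^ w)) = (S a z) ^ (q ^ w)"
  shows "inRn w a"
proof -
  have "tau n (q ^ w) 1 a = a"
    by (rule S_ext_mult[of _ _ w]) (use assms S_tau[OF assms(1), where w=w and v=1] tau_deg in auto)
  then have "coeff a i ^ (q ^ w) = coeff a i" for i
    using tau1_coeff[of "q^w" a i] assms(1) coeff_eq_0[of a i] q_pos
    by (metis (no_types, lifting) leI le_less_trans zero_power less_numeral_extra(3) not_gr_zero power_eq_0_iff)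
  then show ?thesis using assms(1) unfolding Rn_def subF_def by auto
qed

lemma inRn_add: "inRn w a \<Longrightarrow> inRn w b \<Longrightarrow> inRn w (a + b)"
  unfolding Rn_def using degree_add_le_max[of a b] by (auto intro: subF_add)
lemma inRn_diff: "inRn w a \<Longrightarrow> inRn w b \<Longrightarrow> inRn w (a - b)"
  unfolding Rn_def using degree_diff_le_max[of a b] by (auto intro: subF_diff)
lemma inRn_uminus: "inRn w a \<Longrightarrow> inRn w (- a)"
  unfolding Rn_def by (auto intro: subF_uminus)
lemma inRn_0: "inRn w 0" unfolding Rn_def using n subF_0 by auto
lemma inRn_1: "inRn w 1" unfolding Rn_def using n subF_0 subF_1 by (auto simp: coeff_1)
lemma inRn_sum: "(\<And>i. i \<in> A \<Longrightarrow> inRn w (f i)) \<Longrightarrow> inRn w (sum f A)"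
  by (induction A rule: infinite_finite_induct) (auto intro: inRn_add inRn_0)
lemma inRn_smult: "c \<in> subF (q ^ w) \<Longrightarrow> inRn w a \<Longrightarrow> inRn w (smult c a)"
  unfolding Rn_def by (auto intro: subF_mult)
lemma inRn_rmul: "inRn w a \<Longrightarrow> inRn w b \<Longrightarrow> inRn w (rmul n a b)"
proof -
  assume a: "inRn w a" and b: "inRn w b"
  show ?thesis
    by (rule frob_crit2[OF rmul_deg]) (simp only: S_rmul frob_crit1[OF a] frob_crit1[OF b] power_mult_distrib)
qed
lemma inRn_tau: "inRn w a \<Longrightarrow> inRn w (tau n e v a)"
proof -
  assume a: "inRn w a"
  have "coeff (tau n e v a) j \<in> subF (q ^ w)" for j
    unfolding tau_coeff using a unfolding Rn_def
    by (intro subF_sum) (auto intro: subF_power subF_0)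
  then show ?thesis using tau_deg unfolding Rn_def by auto
qed
lemma inRn_mono: "inRn 1 a \<Longrightarrow> inRn w a"
  unfolding Rn_def using subF_q by auto

lemma finite_deg: "finite {a :: 'a poly. degree a < n}"
proof -
  have "{a :: 'a poly. degree a < n} \<subseteq> Poly ` {xs. set xs \<subseteq> UNIV \<and> length xs = n}"
  proof
    fix a :: "'a poly" assume "a \<in> {a. degree a < n}"
    then have d: "degree a < n" by simp
    have "a = Poly (map (coeff a) [0..<n])"
      by (rule poly_eqI) (use d in \<open>auto simp: nth_default_def coeff_eq_0\<close>)
    moreover have "map (coeff a) [0..<n] \<in> {xs. set xs \<subseteq> UNIV \<and> length xs = n}" by simp
    ultimately show "a \<in> Poly ` {xs. set xs \<subseteq> UNIV \<and> length xs = n}" by (rule image_eqI)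
  qed
  moreover have "finite (Poly ` {xs. set xs \<subseteq> (UNIV :: 'a set) \<and> length xs = n})"
    by (rule finite_imageI[OF finite_lists_length_eq]) simp
  ultimately show ?thesis by (rule finite_subset)
qed

end

context fsetup begin

definition inC :: "nat \<Rightarrow> int \<Rightarrow> bool" where
  "inC l z \<longleftrightarrow> (\<exists>j. [z = int l * int q ^ j] (mod int n))"

lemma inC_cong: "[z = z'] (mod int n) \<Longrightarrow> inC l z = inC l z'"
  unfolding inC_def by (meson cong_sym cong_trans)

lemma inC_mult: "inC l z \<Longrightarrow> inC l (z * int q ^ w)"
proof -
  assume "inC l z"
  then obtain j where "[z = int l * int q ^ j] (mod int n)" unfolding inC_def by auto
  then have "[z * int q ^ w = int l * int q ^ j * int q ^ w] (mod int n)" by (rule cong_mult[OF _ cong_refl])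
  then show ?thesis unfolding inC_def by (intro exI[of _ "j + w"]) (simp add: power_add mult.assoc)
qed

lemma inC_div: "inC l (z * int q ^ w) \<Longrightarrow> inC l z"
proof -
  assume "inC l (z * int q ^ w)"
  then have "inC l (z * int q ^ w * int q ^ (w * (Tq - 1)))" by (rule inC_mult)
  moreover have "[z * int q ^ w * int q ^ (w * (Tq - 1)) = z] (mod int n)"
    using reindex[of z w] by (simp add: mult_ac)
  ultimately show ?thesis using inC_cong by metis
qed

lemma inC_orbit: "inC l z \<Longrightarrow> inC l z0 \<Longrightarrow> \<exists>w. [z = z0 * int q ^ w] (mod int n)"
proof -
  assume "inC l z" "inC l z0"
  then obtain m i where m: "[z = int l * int q ^ m] (mod int n)" and i: "[z0 = int l * int q ^ i] (mod int n)"
    unfolding inC_def by auto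
  have "[z0 * int q ^ (m + (Tq - 1) * i) = int l * int q ^ i * int q ^ (m + (Tq - 1) * i)] (mod int n)"
    by (rule cong_mult[OF i cong_refl])
  also have "int l * int q ^ i * int q ^ (m + (Tq - 1) * i) = int l * int q ^ m * int q ^ (Tq * i)"
  proof -
    obtain T' where T': "Tq = Suc T'" using Tq(1) by (cases Tq) auto
    have e: "i + (m + (Tq - 1) * i) = m + Tq * i" unfolding T' by simp
    have "int l * int q ^ i * int q ^ (m + (Tq - 1) * i) = int l * int q ^ (i + (m + (Tq - 1) * i))"
      by (simp add: power_add mult.assoc)
    also have "\<dots> = int l * int q ^ m * int q ^ (Tq * i)" by (simp only: e power_add mult.assoc)
    finally show ?thesis .
  qed
  also have "[\<dots> = int l * int q ^ m * 1] (mod int n)" by (rule cong_mult[OF cong_refl Tq_int])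
  finally have "[z0 * int q ^ (m + (Tq - 1) * i) = int l * int q ^ m] (mod int n)" by simp
  then have "[z = z0 * int q ^ (m + (Tq - 1) * i)] (mod int n)" using m cong_sym cong_trans by metis
  then show ?thesis by blast
qed

lemma cyc_iff: "x \<in> cyc_coset n q l \<longleftrightarrow> x < n \<and> inC l (int x)"
proof
  assume "x \<in> cyc_coset n q l"
  then obtain j where j: "x = (l * q ^ j) mod n" unfolding cyc_coset_def by auto
  then have "x < n" using n by simp
  moreover have "[int x = int l * int q ^ j] (mod int n)"
    using j by (simp add: cong_def of_nat_mod[symmetric] zmod_int)
  ultimately show "x < n \<and> inC l (int x)" unfolding inC_def by auto
next
  assume "x < n \<and> inC l (int x)"
  then obtain j where x: "x < n" and j: "[int x = int l * int q ^ j] (mod int n)" unfolding inC_def by auto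
  then have "[x = l * q ^ j] (mod n)" by (metis cong_int_iff of_nat_mult of_nat_power)
  then have "x = (l * q ^ j) mod n" using x by (simp add: cong_def)
  then show "x \<in> cyc_coset n q l" unfolding cyc_coset_def by auto
qed

lemma cyc_iff_int: "nat (z mod int n) \<in> cyc_coset n q l \<longleftrightarrow> inC l z"
proof -
  have a: "nat (z mod int n) < n" using n by (simp add: nat_less_iff)
  have b: "[int (nat (z mod int n)) = z] (mod int n)" using n by (simp add: cong_def)
  show ?thesis using cyc_iff[of "nat (z mod int n)" l] inC_cong[OF b, of l] a by simp
qed

lemma inC_neg: "inC (negmod n l) z \<longleftrightarrow> inC l (- z)"
proof -
  have nm: "[int (negmod n l) = - int l] (mod int n)"
  proof -
    have "int (negmod n l) = (int n - int (l mod n)) mod int n"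
      unfolding negmod_def using n by (simp add: of_nat_diff zmod_int)
    also have "[\<dots> = int n - int (l mod n)] (mod int n)" by (simp add: cong_def)
    also have "[int n - int (l mod n) = 0 - int l] (mod int n)"
      by (rule cong_diff) (simp_all add: cong_def zmod_int[symmetric])
    finally show ?thesis by simp
  qed
  have "[z = int (negmod n l) * int q ^ j] (mod int n) \<longleftrightarrow> [- z = int l * int q ^ j] (mod int n)" for j
  proof -
    have "[int (negmod n l) * int q ^ j = - int l * int q ^ j] (mod int n)" by (rule cong_mult[OF nm cong_refl])
    then have "[z = int (negmod n l) * int q ^ j] (mod int n) \<longleftrightarrow> [z = - (int l * int q ^ j)] (mod int n)"
      by (auto intro: cong_trans cong_sym)
    also have "\<dots> \<longleftrightarrow> [- z = int l * int q ^ j] (mod int n)"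
      by (metis cong_minus_minus_iff minus_minus)
    finally show ?thesis .
  qed
  then show ?thesis unfolding inC_def by simp
qed

lemma coset_sub: "inC l z \<Longrightarrow> inC l' z \<Longrightarrow> cyc_coset n q l \<subseteq> cyc_coset n q l'"
proof
  fix x assume a: "inC l z" "inC l' z" and x: "x \<in> cyc_coset n q l"
  then have kn: "x < n" and kC: "inC l (int x)" using cyc_iff by auto
  obtain w where w: "[int x = z * int q ^ w] (mod int n)" using inC_orbit[OF kC a(1)] by auto
  have "inC l' (z * int q ^ w)" by (rule inC_mult[OF a(2)])
  then have "inC l' (int x)" using inC_cong[OF w, of l'] by simp
  then show "x \<in> cyc_coset n q l'" using kn cyc_iff by auto
qed

lemma coset_disj: "cyc_coset n q l \<noteq> cyc_coset n q l' \<Longrightarrow> \<not> (inC l z \<and> inC l' z)"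
  using coset_sub by blast

lemma coset_nonempty: "l mod n \<in> cyc_coset n q l" unfolding cyc_coset_def by (intro CollectI exI[of _ 0]) simp

end

context fsetup begin

abbreviation lin :: "nat \<Rightarrow> 'a poly" where "lin i \<equiv> [:- (\<eta> ^ i), 1:]"

lemma eta_pow_mod: "\<eta> ^ a = \<eta> ^ (a mod n)"
proof -
  have "\<eta> ^ a = \<eta> ^ (n * (a div n) + a mod n)" by simp
  also have "\<dots> = (\<eta> ^ n) ^ (a div n) * \<eta> ^ (a mod n)" by (simp only: power_add power_mult)
  finally have "\<eta> ^ a = (\<eta> ^ n) ^ (a div n) * \<eta> ^ (a mod n)" .
  then show ?thesis using eta_n by simp
qed

lemma eta_powi_nat: "\<eta> powi z = \<eta> ^ nat (z mod int n)"
proof -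
  have "\<eta> powi z = \<eta> powi (z mod int n)" by (rule eta_powi_mod[symmetric])
  also have "\<dots> = \<eta> powi int (nat (z mod int n))"
  proof -
    have e: "int (nat (z mod int n)) = z mod int n" using n by simp
    show ?thesis by (simp only: e)
  qed
  also have "\<dots> = \<eta> ^ nat (z mod int n)" by (rule power_int_of_nat)
  finally show ?thesis .
qed

lemma prod_lin_deg: "degree (\<Prod>i\<in>A. lin i) = card A"
proof (cases "finite A")
  case True
  have "degree (\<Prod>i\<in>A. lin i) = (\<Sum>i\<in>A. degree (lin i))" by (rule degree_prod_sum_eq) simp
  then show ?thesis by simp
next
  case False then show ?thesis by simp
qed

lemma prod_lin_lead: "lead_coeff (\<Prod>i\<in>A. lin i) = 1"
  by (simp add: lead_coeff_prod)

lemma prod_lin_nz: "(\<Prod>i\<in>A. lin i) \<noteq> 0"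
  using prod_lin_lead[of A] by auto

lemma S_prod_lin: "S (\<Prod>i\<in>A. lin i) z = (\<Prod>i\<in>A. \<eta> powi z - \<eta> ^ i)"
  unfolding S_def by (simp add: poly_prod)

lemma S_prod_lin_zero: "A \<subseteq> {..<n} \<Longrightarrow> S (\<Prod>i\<in>A. lin i) z = 0 \<longleftrightarrow> nat (z mod int n) \<in> A"
proof -
  assume A: "A \<subseteq> {..<n}"
  have fin: "finite A" using A finite_subset by blast
  have zn: "nat (z mod int n) < n" using n by (simp add: nat_less_iff)
  have "S (\<Prod>i\<in>A. lin i) z = 0 \<longleftrightarrow> (\<exists>i\<in>A. \<eta> ^ nat (z mod int n) = \<eta> ^ i)"
    unfolding S_prod_lin eta_powi_nat using fin by (simp add: prod_zero_iff)
  also have "\<dots> \<longleftrightarrow> nat (z mod int n) \<in> A"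
    using eta_inj zn A by blast
  finally show ?thesis .
qed

lemma xn1_prod: "xn1 n = (\<Prod>i<n. lin i)"
proof -
have "xn1 n - (\<Prod>i<n. lin i) = 0"
proof (rule S_ext)
  show "degree (xn1 n - (\<Prod>i<n. lin i)) < n"
  proof (rule deg_lt_I)
    fix j assume j: "n \<le> j"
    show "coeff (xn1 n - (\<Prod>i<n. lin i)) j = 0"
    proof (cases "j = n")
      case True
      have "coeff (\<Prod>i<n. lin i) n = 1" using prod_lin_lead[of "{..<n}"] prod_lin_deg[of "{..<n}"] by simp
      then show ?thesis using True n by (simp add: xn1_def coeff_monom)
    next
      case False
      then have "j > n" using j by simp
      then have "coeff (xn1 n :: 'a poly) j = 0" "coeff (\<Prod>i<n. lin i) j = 0"
        using deg_xn1 prod_lin_deg[of "{..<n}"] by (auto intro!: coeff_eq_0)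
      then show ?thesis by simp
    qed
  qed
  show "degree (0::'a poly) < n" using n by simp
  fix z
  have "S (\<Prod>i<n. lin i) z = 0" using S_prod_lin_zero[of "{..<n}" z] n by (simp add: nat_less_iff)
  then show "S (xn1 n - (\<Prod>i<n. lin i)) z = S 0 z" by (simp add: S_diff S_def xn1_root)
qed
then show ?thesis by simp
qed

definition Dset :: "nat \<Rightarrow> nat set" where "Dset l = {..<n} - cyc_coset n q l"
definition gp :: "nat \<Rightarrow> 'a poly" where "gp l = xn1 n div fpoly \<eta> (cyc_coset n q l)"

lemma coset_lt: "cyc_coset n q l \<subseteq> {..<n}" unfolding cyc_coset_def using n by auto

lemma gp_prod: "gp l = (\<Prod>i\<in>Dset l. lin i)"
proof -
  have "xn1 n = (\<Prod>i\<in>Dset l. lin i) * fpoly \<eta> (cyc_coset n q l)"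
    unfolding xn1_prod fpoly_def Dset_def by (rule prod.subset_diff[OF coset_lt]) simp
  moreover have "fpoly \<eta> (cyc_coset n q l) \<noteq> 0" unfolding fpoly_def by (rule prod_lin_nz)
  ultimately show ?thesis unfolding gp_def by simp
qed

lemma gp_deg: "degree (gp l) < n"
proof -
  have "card (Dset l) < card {..<n}" unfolding Dset_def
    using coset_nonempty[of l] coset_lt[of l] by (intro psubset_card_mono) auto
  then show ?thesis unfolding gp_prod prod_lin_deg by simp
qed

lemma S_gp_zero: "S (gp l) z = 0 \<longleftrightarrow> \<not> inC l z"
proof -
  have "S (gp l) z = 0 \<longleftrightarrow> nat (z mod int n) \<in> Dset l"
    unfolding gp_prod by (rule S_prod_lin_zero) (auto simp: Dset_def)
  also have "\<dots> \<longleftrightarrow> \<not> inC l z" unfolding Dset_def using n cyc_iff_int[of z l]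
    by (simp add: nat_less_iff)
  finally show ?thesis .
qed

lemma mulq_bij: "bij_betw (\<lambda>i. (i * q) mod n) (Dset l) (Dset l)"
proof -
  have fin: "finite (Dset l)" unfolding Dset_def by simp
  have inj: "inj_on (\<lambda>i. (i * q) mod n) (Dset l)"
  proof (rule inj_onI)
    fix x y assume x: "x \<in> Dset l" and y: "y \<in> Dset l" and e: "(x * q) mod n = (y * q) mod n"
    have "[x * q = y * q] (mod n)" using e by (simp add: cong_def)
    then have "[x = y] (mod n)" using cop cong_mult_rcancel_nat coprime_commute by blast
    then show "x = y" using x y unfolding Dset_def by (simp add: cong_def)
  qed
  have sub: "(\<lambda>i. (i * q) mod n) ` Dset l \<subseteq> Dset l"
  proof
    fix y assume "y \<in> (\<lambda>i. (i * q) mod n) ` Dset l"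
    then obtain x where x: "x \<in> Dset l" and y: "y = (x * q) mod n" by auto
    have yn: "y < n" using y n by simp
    have "y \<notin> cyc_coset n q l"
    proof
      assume "y \<in> cyc_coset n q l"
      then have "inC l (int y)" using cyc_iff by blast
      moreover have "[int y = int x * int q ^ 1] (mod int n)" using y by (simp add: cong_def zmod_int)
      ultimately have "inC l (int x * int q ^ 1)" using inC_cong by metis
      then have "inC l (int x)" by (rule inC_div)
      then have "x \<in> cyc_coset n q l" using x cyc_iff unfolding Dset_def by auto
      then show False using x unfolding Dset_def by auto
    qed
    then show "y \<in> Dset l" using yn unfolding Dset_def by auto
  qed
  show ?thesis unfolding bij_betw_def using inj endo_inj_surj[OF fin sub inj] by simp
qed

lemma gp_Rq: "inRn 1 (gp l)"
proof (rule frob_crit2[OF gp_deg])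
  fix z
  have "(S (gp l) z) ^ (q ^ 1) = (\<Prod>i\<in>Dset l. (\<eta> powi z - \<eta> ^ i) ^ (q ^ 1))"
    unfolding gp_prod S_prod_lin by (rule prod_power_distrib)
  also have "\<dots> = (\<Prod>i\<in>Dset l. \<eta> powi (z * int (q ^ 1)) - \<eta> ^ ((i * q) mod n))"
  proof (rule prod.cong[OF refl])
    fix i
    have "(\<eta> powi z - \<eta> ^ i) ^ (q ^ 1) = (\<eta> powi z) ^ (q ^ 1) - (\<eta> ^ i) ^ (q ^ 1)" by (rule fr_diff)
    also have "(\<eta> powi z) ^ (q ^ 1) = \<eta> powi (z * int (q ^ 1))" by (rule eta_powi_pow)
    also have "(\<eta> ^ i) ^ (q ^ 1) = \<eta> ^ ((i * q) mod n)" by (simp add: power_mult[symmetric] eta_pow_mod[of "i*q"])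
    finally show "(\<eta> powi z - \<eta> ^ i) ^ (q ^ 1) = \<eta> powi (z * int (q ^ 1)) - \<eta> ^ ((i * q) mod n)" .
  qed
  also have "\<dots> = (\<Prod>i\<in>Dset l. \<eta> powi (z * int (q ^ 1)) - \<eta> ^ i)"
    using prod.reindex_bij_betw[OF mulq_bij[of l], of "\<lambda>i. \<eta> powi (z * int (q ^ 1)) - \<eta> ^ i"] by simp
  also have "\<dots> = S (gp l) (z * int (q ^ 1))" unfolding gp_prod S_prod_lin ..
  finally show "S (gp l) (z * int (q ^ 1)) = S (gp l) z ^ q ^ 1" by simp
qed

end

context fsetup begin

lemma rmul_comm: "rmul n a b = rmul n b a" unfolding rmul_def by (simp add: mult.commute)
lemma rmul_assoc: "rmul n (rmul n a b) c = rmul n a (rmul n (b::'a poly) c)"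
  unfolding rmul_def by (simp add: mod_mult_left_eq mod_mult_right_eq mult.assoc)
lemma rmul_add: "rmul n a (b + c) = rmul n a b + rmul n a (c::'a poly)"
  unfolding rmul_def by (simp add: distrib_left poly_mod_add_left)
lemma rmul_add_left: "rmul n (b + c) a = rmul n b a + rmul n (c::'a poly) a"
  using rmul_add rmul_comm by metis
lemma rmul_diff: "rmul n a (b - c) = rmul n a b - rmul n a (c::'a poly)"
  unfolding rmul_def by (simp add: right_diff_distrib poly_mod_diff_left)
lemma rmul_minus: "rmul n a (- b) = - rmul n a (b::'a poly)"
  unfolding rmul_def by simp
lemma rmul_minus_left: "rmul n (- b) a = - rmul n (b::'a poly) a"
  unfolding rmul_def by simp
lemma rmul_0: "rmul n a 0 = (0::'a poly)" unfolding rmul_def by simp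
lemma rmul_0_left: "rmul n 0 a = (0::'a poly)" unfolding rmul_def by simp
lemma rmul_1: "degree a < n \<Longrightarrow> rmul n a 1 = (a::'a poly)"
  unfolding rmul_def using deg_xn1 by (simp add: mod_poly_less)
lemma rmul_sum: "rmul n a (sum f A) = (\<Sum>i\<in>A. rmul n a (f i :: 'a poly))"
  by (induction A rule: infinite_finite_induct) (auto simp: rmul_add rmul_0)
lemma rmul_smult: "rmul n a (smult c b) = smult c (rmul n a (b::'a poly))"
  unfolding rmul_def by (simp add: mod_smult_left)
lemma rmul_smult_left: "rmul n (smult c b) a = smult c (rmul n (b::'a poly) a)"
  unfolding rmul_def by (simp add: mod_smult_left)

definition supp :: "nat \<Rightarrow> 'a poly \<Rightarrow> bool" where
  "supp l a \<longleftrightarrow> (\<forall>z. \<not> inC l z \<longrightarrow> S a z = 0)"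

lemma supp_rmul: "supp l a \<Longrightarrow> supp l (rmul n a b)" unfolding supp_def by (simp add: S_rmul)
lemma supp_rmul2: "supp l b \<Longrightarrow> supp l (rmul n a b)" unfolding supp_def by (simp add: S_rmul)
lemma supp_add: "supp l a \<Longrightarrow> supp l b \<Longrightarrow> supp l (a + b)" unfolding supp_def by (simp add: S_add)
lemma supp_diff: "supp l a \<Longrightarrow> supp l b \<Longrightarrow> supp l (a - b)" unfolding supp_def by (simp add: S_diff)
lemma supp_minus: "supp l a \<Longrightarrow> supp l (- a)" unfolding supp_def by (simp add: S_minus)
lemma supp_0: "supp l 0" unfolding supp_def by (simp add: S_0)
lemma supp_smult: "supp l a \<Longrightarrow> supp l (smult c a)" unfolding supp_def by (simp add: S_smult)
lemma supp_sum: "(\<And>i. i \<in> A \<Longrightarrow> supp l (f i)) \<Longrightarrow> supp l (sum f A)"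
  unfolding supp_def by (simp add: S_sum)
lemma supp_gp: "supp l (gp l)" unfolding supp_def using S_gp_zero by simp

abbreviation KK :: "nat \<Rightarrow> 'a poly set" where "KK l \<equiv> Kideal \<eta> n q l"
abbreviation JJ :: "nat \<Rightarrow> 'a poly set" where "JJ l \<equiv> Jideal \<eta> n q t l"

lemma KK_eq: "KK l = {rmul n (gp l) a | a. inRn 1 a}"
  unfolding Kideal_def gen_ideal_def gp_def by simp
lemma JJ_eq: "JJ l = {rmul n (gp l) a | a. inRn t a}"
  unfolding Jideal_def gen_ideal_def gp_def by simp

lemma KK_Rq: "u \<in> KK l \<Longrightarrow> inRn 1 u"
  unfolding KK_eq using inRn_rmul gp_Rq by blast
lemma JJ_Rt: "u \<in> JJ l \<Longrightarrow> inRn t u"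
  unfolding JJ_eq using inRn_rmul inRn_mono[OF gp_Rq] by blast
lemma KK_supp: "u \<in> KK l \<Longrightarrow> supp l u"
  unfolding KK_eq using supp_rmul supp_gp by blast
lemma JJ_supp: "u \<in> JJ l \<Longrightarrow> supp l u"
  unfolding JJ_eq using supp_rmul supp_gp by blast
lemma KK_deg: "u \<in> KK l \<Longrightarrow> degree u < n" using KK_Rq inRn_deg by blast
lemma JJ_deg: "u \<in> JJ l \<Longrightarrow> degree u < n" using JJ_Rt inRn_deg by blast

lemma KK_rmul: "inRn 1 c \<Longrightarrow> u \<in> KK l \<Longrightarrow> rmul n c u \<in> KK l"
proof -
  assume c: "inRn 1 c" and "u \<in> KK l"
  then obtain d where d: "inRn 1 d" "u = rmul n (gp l) d" unfolding KK_eq by auto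
  have "rmul n c u = rmul n (gp l) (rmul n c d)" unfolding d(2)
    by (metis rmul_assoc rmul_comm)
  then show ?thesis unfolding KK_eq using inRn_rmul[OF c d(1)] by blast
qed
lemma JJ_rmul: "inRn t c \<Longrightarrow> u \<in> JJ l \<Longrightarrow> rmul n c u \<in> JJ l"
proof -
  assume c: "inRn t c" and "u \<in> JJ l"
  then obtain d where d: "inRn t d" "u = rmul n (gp l) d" unfolding JJ_eq by auto
  have "rmul n c u = rmul n (gp l) (rmul n c d)" unfolding d(2)
    by (metis rmul_assoc rmul_comm)
  then show ?thesis unfolding JJ_eq using inRn_rmul[OF c d(1)] by blast
qed

lemma KK_I: "inRn 1 a \<Longrightarrow> rmul n (gp l) a \<in> KK l" unfolding KK_eq by blast
lemma JJ_I: "inRn t a \<Longrightarrow> rmul n (gp l) a \<in> JJ l" unfolding JJ_eq by blast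
lemma KK_E: "u \<in> KK l \<Longrightarrow> (\<And>a. inRn 1 a \<Longrightarrow> u = rmul n (gp l) a \<Longrightarrow> P) \<Longrightarrow> P"
  unfolding KK_eq by blast

lemma KK_add: "u \<in> KK l \<Longrightarrow> v \<in> KK l \<Longrightarrow> u + v \<in> KK l"
proof -
  assume "u \<in> KK l" "v \<in> KK l"
  then obtain a b where ab: "inRn 1 a" "u = rmul n (gp l) a" "inRn 1 b" "v = rmul n (gp l) b"
    by (metis KK_E)
  then have "u + v = rmul n (gp l) (a + b)" by (simp add: rmul_add)
  then show ?thesis using KK_I[OF inRn_add[OF ab(1) ab(3)]] by simp
qed
lemma KK_minus: "u \<in> KK l \<Longrightarrow> - u \<in> KK l"
proof -
  assume "u \<in> KK l"
  then obtain a where a: "inRn 1 a" "u = rmul n (gp l) a" by (metis KK_E)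
  then have "- u = rmul n (gp l) (- a)" by (simp add: rmul_minus)
  then show ?thesis using KK_I[OF inRn_uminus[OF a(1)]] by simp
qed
lemma KK_0: "0 \<in> KK l" using KK_I[OF inRn_0, of l] by (simp add: rmul_0)
lemma gp_KK: "gp l \<in> KK l" using KK_I[OF inRn_1, of l] rmul_1[OF gp_deg] by simp

lemma KK_finite: "finite (KK l)"
  using finite_subset[OF _ finite_deg] KK_deg by blast

lemma gp_inj: "inj_on (rmul n (gp l)) (KK l)"
proof (rule inj_onI)
  fix u v assume u: "u \<in> KK l" and v: "v \<in> KK l" and e: "rmul n (gp l) u = rmul n (gp l) v"
  show "u = v"
  proof (rule S_ext[OF KK_deg[OF u] KK_deg[OF v]])
    fix z
    have "S (gp l) z * S u z = S (gp l) z * S v z" using e by (metis S_rmul)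
    then show "S u z = S v z"
      using KK_supp[OF u] KK_supp[OF v] S_gp_zero[of l z] unfolding supp_def by auto
  qed
qed

lemma E_ex: "\<exists>E\<in>KK l. rmul n (gp l) E = gp l"
proof -
  have sub: "rmul n (gp l) ` KK l \<subseteq> KK l" using KK_rmul[OF gp_Rq] by blast
  have "rmul n (gp l) ` KK l = KK l" by (rule endo_inj_surj[OF KK_finite sub gp_inj])
  then show ?thesis using gp_KK[of l] by (metis imageE)
qed

definition EE :: "nat \<Rightarrow> 'a poly" where "EE l = (SOME E. E \<in> KK l \<and> rmul n (gp l) E = gp l)"

lemma EE: "EE l \<in> KK l" "rmul n (gp l) (EE l) = gp l"
  using someI_ex[OF E_ex[of l, unfolded Bex_def]] unfolding EE_def by auto

lemma S_EE: "S (EE l) z = (if inC l z then 1 else 0)"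
proof (cases "inC l z")
  case True
  have "S (gp l) z * S (EE l) z = S (gp l) z * 1" using EE(2) by (metis S_rmul mult_1_right)
  then show ?thesis using True S_gp_zero[of l z] by simp
next
  case False then show ?thesis using KK_supp[OF EE(1)] unfolding supp_def by simp
qed

lemma EE_id: "degree a < n \<Longrightarrow> supp l a \<Longrightarrow> rmul n (EE l) a = a"
  by (rule S_ext[OF rmul_deg]) (auto simp: S_rmul S_EE supp_def)

lemma EE_kill: "cyc_coset n q l \<noteq> cyc_coset n q l' \<Longrightarrow> supp l' a \<Longrightarrow> rmul n (EE l) a = 0"
  by (rule S_ext[OF rmul_deg]) (use n coset_disj[of l l'] in \<open>auto simp: S_rmul S_EE supp_def S_0\<close>)

lemma KK_char: "inRn 1 a \<Longrightarrow> supp l a \<Longrightarrow> a \<in> KK l"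
proof -
  assume a: "inRn 1 a" "supp l a"
  obtain d where d: "inRn 1 d" "EE l = rmul n (gp l) d" using EE(1) unfolding KK_eq by auto
  have "a = rmul n (EE l) a" using EE_id[OF inRn_deg[OF a(1)] a(2)] by simp
  also have "\<dots> = rmul n (gp l) (rmul n d a)" unfolding d(2) by (rule rmul_assoc)
  finally show ?thesis unfolding KK_eq using inRn_rmul[OF d(1) a(1)] by blast
qed
lemma JJ_char: "inRn t a \<Longrightarrow> supp l a \<Longrightarrow> a \<in> JJ l"
proof -
  assume a: "inRn t a" "supp l a"
  obtain d where d: "inRn 1 d" "EE l = rmul n (gp l) d" using EE(1) unfolding KK_eq by auto
  have "a = rmul n (EE l) a" using EE_id[OF inRn_deg[OF a(1)] a(2)] by simp
  also have "\<dots> = rmul n (gp l) (rmul n d a)" unfolding d(2) by (rule rmul_assoc)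
  finally show ?thesis unfolding JJ_eq using inRn_rmul[OF inRn_mono[OF d(1)] a(1)] by blast
qed
lemma KK_JJ: "u \<in> KK l \<Longrightarrow> u \<in> JJ l"
  using JJ_char inRn_mono KK_Rq KK_supp by blast

lemma KK_nz: "u \<in> KK l \<Longrightarrow> u \<noteq> 0 \<Longrightarrow> inC l z \<Longrightarrow> S u z \<noteq> 0"
proof
  assume u: "u \<in> KK l" "u \<noteq> 0" and z: "inC l z" and s: "S u z = 0"
  have "u = 0"
  proof (rule S_ext[OF KK_deg[OF u(1)]])
    show "degree (0::'a poly) < n" using n by simp
    fix z' show "S u z' = S 0 z'"
    proof (cases "inC l z'")
      case True
      obtain w where w: "[z' = z * int q ^ w] (mod int n)" using inC_orbit[OF True z] by auto
      have "S u z' = S u (z * int (q ^ w))" using S_cong[OF w] by simp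
      also have "\<dots> = (S u z) ^ (q ^ w)" by (rule frob_crit1[OF inRn_mono[OF KK_Rq[OF u(1)]]])
      finally show ?thesis using s q_pos by (simp add: S_0)
    next
      case False then show ?thesis using KK_supp[OF u(1)] unfolding supp_def by (simp add: S_0)
    qed
  qed
  then show False using u(2) by simp
qed

lemma KK_inv: "u \<in> KK l \<Longrightarrow> u \<noteq> 0 \<Longrightarrow> \<exists>v\<in>KK l. rmul n v u = EE l"
proof -
  assume u: "u \<in> KK l" "u \<noteq> 0"
  have inj: "inj_on (rmul n u) (KK l)"
  proof (rule inj_onI)
    fix x y assume x: "x \<in> KK l" and y: "y \<in> KK l" and e: "rmul n u x = rmul n u y"
    show "x = y"
    proof (rule S_ext[OF KK_deg[OF x] KK_deg[OF y]])
      fix z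
      have m: "S u z * S x z = S u z * S y z" using e by (metis S_rmul)
      show "S x z = S y z"
      proof (cases "inC l z")
        case True then show ?thesis using m KK_nz[OF u True] by simp
      next
        case False then show ?thesis using KK_supp[OF x] KK_supp[OF y] unfolding supp_def by simp
      qed
    qed
  qed
  have sub: "rmul n u ` KK l \<subseteq> KK l" using KK_rmul[OF KK_Rq[OF u(1)]] by blast
  have "rmul n u ` KK l = KK l" by (rule endo_inj_surj[OF KK_finite sub inj])
  then obtain v where "v \<in> KK l" "EE l = rmul n u v" using EE(1) by (metis imageE)
  then show ?thesis using rmul_comm by metis
qed

lemma ident_EE: "ident n (KK l) = EE l"
  unfolding ident_def
proof (rule the_equality)
  show "EE l \<in> KK l \<and> (\<forall>u\<in>KK l. rmul n (EE l) u = u)"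
    using EE(1) EE_id KK_deg KK_supp by blast
  fix e assume e: "e \<in> KK l \<and> (\<forall>u\<in>KK l. rmul n e u = u)"
  then have "rmul n e (EE l) = EE l" using EE(1) by blast
  moreover have "rmul n (EE l) e = e" using EE_id KK_deg KK_supp e by blast
  ultimately show "e = EE l" using rmul_comm by metis
qed

lemma EE_nz: "EE l \<noteq> 0"
proof
  assume "EE l = 0"
  then have "S (EE l) (int l) = 0" by (simp add: S_0)
  moreover have "inC l (int l)" unfolding inC_def by (intro exI[of _ 0]) simp
  ultimately show False using S_EE by simp
qed

end

context fsetup begin

definition inv :: "'a poly \<Rightarrow> 'a poly" where "inv a = tau n 1 (-1) a"
definition Fr :: "nat \<Rightarrow> 'a poly \<Rightarrow> 'a poly" where "Fr w a = tau n (q ^ w) 1 a"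

lemma S_inv: "degree a < n \<Longrightarrow> S (inv a) z = S a (- z)"
  using S_tau[of a 0 "-1" z] unfolding inv_def by simp

lemma S_Fr: "degree a < n \<Longrightarrow> S (Fr w a) (z * int (q ^ w)) = (S a z) ^ (q ^ w)"
  using S_tau[of a w 1 z] unfolding Fr_def by simp

lemma inv_deg: "degree (inv a) < n" unfolding inv_def by (rule tau_deg)
lemma Fr_deg: "degree (Fr w a) < n" unfolding Fr_def by (rule tau_deg)

lemma inv_inv: "degree a < n \<Longrightarrow> inv (inv a) = a"
proof -
  assume a: "degree a < n"
  show ?thesis by (rule S_ext[OF inv_deg a]) (simp only: S_inv[OF inv_deg] S_inv[OF a] minus_minus)
qed

lemma inv_rmul: "degree a < n \<Longrightarrow> degree b < n \<Longrightarrow> inv (rmul n a b) = rmul n (inv a) (inv b)"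
proof -
  assume a: "degree a < n" and b: "degree b < n"
  show ?thesis
    by (rule S_ext[OF inv_deg rmul_deg]) (simp only: S_inv[OF rmul_deg] S_rmul S_inv[OF a] S_inv[OF b])
qed

lemma inv_add: "inv (a + b) = inv a + inv b"
  using tau_add[of 0 "-1" a b] unfolding inv_def by simp
lemma inv_0: "inv 0 = 0" using tau_0[of 0 "-1"] unfolding inv_def by simp
lemma inv_minus: "inv (- a) = - inv a"
  using inv_add[of a "- a"] inv_0 by (simp add: eq_neg_iff_add_eq_0 add.commute)
lemma inv_diff: "inv (a - b) = inv a - inv b"
  using inv_add[of a "- b"] inv_minus[of b] by simp

lemma Fr_add: "Fr w (a + b) = Fr w a + Fr w b" unfolding Fr_def by (rule tau_add)
lemma Fr_0: "Fr w 0 = 0" unfolding Fr_def by (rule tau_0)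
lemma Fr_minus: "Fr w (- a) = - Fr w a"
  using Fr_add[of w a "- a"] Fr_0[of w] by (simp add: eq_neg_iff_add_eq_0 add.commute)
lemma Fr_diff: "Fr w (a - b) = Fr w a - Fr w b"
  using Fr_add[of w a "- b"] Fr_minus[of w b] by simp
lemma Fr_sum: "Fr w (sum f A) = (\<Sum>i\<in>A. Fr w (f i))"
  by (induction A rule: infinite_finite_induct) (simp_all add: Fr_0 Fr_add)
lemma inv_sum: "inv (sum f A) = (\<Sum>i\<in>A. inv (f i))"
  by (induction A rule: infinite_finite_induct) (simp_all add: inv_0 inv_add)

lemma Fr_rmul: "degree a < n \<Longrightarrow> degree b < n \<Longrightarrow> Fr w (rmul n a b) = rmul n (Fr w a) (Fr w b)"
proof -
  assume a: "degree a < n" and b: "degree b < n"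
  show ?thesis by (rule S_ext_mult[OF Fr_deg rmul_deg, where w=w])
     (simp only: S_Fr[OF rmul_deg] S_rmul S_Fr[OF a] S_Fr[OF b] power_mult_distrib)
qed

lemma surj_mult: "\<exists>z'. [z = z' * int (q ^ w)] (mod int n)"
  using cong_sym[OF reindex[of z w]] by blast

lemma Fr_supp: "degree c < n \<Longrightarrow> supp l c \<Longrightarrow> supp l (Fr w c)"
  unfolding supp_def
proof (intro allI impI)
  fix z assume c: "degree c < n" "\<forall>z. \<not> inC l z \<longrightarrow> S c z = 0" and z: "\<not> inC l z"
  obtain z' where z': "[z = z' * int (q ^ w)] (mod int n)" using surj_mult by blast
  have "\<not> inC l z'"
  proof
    assume "inC l z'"
    then have "inC l (z' * int q ^ w)" by (rule inC_mult)
    then show False using z inC_cong[OF z', of l] by simp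
  qed
  then have "S c z' = 0" using c(2) by blast
  have "S (Fr w c) z = S (Fr w c) (z' * int (q ^ w))" by (rule S_cong[OF z'])
  also have "\<dots> = (S c z') ^ (q ^ w)" by (rule S_Fr[OF c(1)])
  finally show "S (Fr w c) z = 0" using \<open>S c z' = 0\<close> q_pos by simp
qed

lemma inv_supp: "degree a < n \<Longrightarrow> supp l a \<Longrightarrow> supp (negmod n l) (inv a)"
  unfolding supp_def by (simp add: S_inv inC_neg)
lemma inv_supp2: "degree a < n \<Longrightarrow> supp (negmod n l) a \<Longrightarrow> supp l (inv a)"
  unfolding supp_def by (simp add: S_inv inC_neg)

lemma Fr_inv: "degree c < n \<Longrightarrow> Fr w (inv c) = inv (Fr w c)"
proof -
  assume c: "degree c < n"
  show ?thesis
  proof (rule S_ext_mult[OF Fr_deg inv_deg, where w=w])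
    fix z
    have "S (Fr w (inv c)) (z * int (q ^ w)) = (S c (- z)) ^ (q ^ w)"
      by (simp only: S_Fr[OF inv_deg] S_inv[OF c])
    moreover have "S (inv (Fr w c)) (z * int (q ^ w)) = (S c (- z)) ^ (q ^ w)"
      using S_inv[OF Fr_deg, of w c "z * int (q ^ w)"] S_Fr[OF c, of w "- z"] by simp
    ultimately show "S (Fr w (inv c)) (z * int (q ^ w)) = S (inv (Fr w c)) (z * int (q ^ w))" by simp
  qed
qed

lemma tauneg: "degree c < n \<Longrightarrow> tau n (q ^ w) (-1) c = Fr w (inv c)"
proof -
  assume c: "degree c < n"
  show ?thesis
  proof (rule S_ext_mult[OF tau_deg Fr_deg, where w=w])
    fix z
    show "S (tau n (q ^ w) (-1) c) (z * int (q ^ w)) = S (Fr w (inv c)) (z * int (q ^ w))"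
      using S_tau[OF c, of w "-1" z] S_Fr[OF inv_deg, of w c z] S_inv[OF c, of z] by simp
  qed
qed

lemma Fr0: "degree c < n \<Longrightarrow> Fr 0 c = c"
proof -
  assume c: "degree c < n"
  show ?thesis by (rule S_ext[OF Fr_deg c]) (use S_Fr[OF c, of 0] in simp)
qed

lemma Fr_id: "inRn 1 u \<Longrightarrow> Fr w u = u"
  unfolding Fr_def by (rule tau_id[OF inRn_mono])

lemma Fr_smult: "degree c < n \<Longrightarrow> Fr w (smult g c) = smult (g ^ (q ^ w)) (Fr w c)"
proof -
  assume c: "degree c < n"
  have d: "degree (smult g c) < n" using c degree_smult_le le_less_trans by blast
  have d2: "degree (smult (g ^ (q ^ w)) (Fr w c)) < n" using Fr_deg degree_smult_le le_less_trans by blast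
  show ?thesis
  proof (rule S_ext_mult[OF Fr_deg d2, where w=w])
    fix z
    show "S (Fr w (smult g c)) (z * int (q ^ w)) = S (smult (g ^ (q ^ w)) (Fr w c)) (z * int (q ^ w))"
      by (simp only: S_Fr[OF d] S_smult S_Fr[OF c] power_mult_distrib)
  qed
qed

lemma Fr_coeff: "coeff (Fr w c) j = (if j < n then coeff c j ^ (q ^ w) else 0)"
  unfolding Fr_def by (rule tau1_coeff)

lemma Fr_Fr: "Fr w (Fr s c) = Fr (w + s) c"
  by (rule poly_eqI) (simp add: Fr_coeff power_mult[symmetric] power_add mult.commute)

lemma pow_period: "x ^ (q ^ t) = (x::'a) \<Longrightarrow> x ^ (q ^ y) = x ^ (q ^ (y mod t))"
proof -
  assume x: "x ^ (q ^ t) = x"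
  have "x ^ (q ^ y) = x ^ (q ^ (t * (y div t) + y mod t))" by simp
  also have "\<dots> = (x ^ (q ^ (t * (y div t)))) ^ (q ^ (y mod t))" by (simp only: power_add power_mult)
  also have "x ^ (q ^ (t * (y div t))) = x" by (rule subF_pow_iter[OF x])
  finally show ?thesis .
qed

lemma Fr_period: "inRn t c \<Longrightarrow> Fr y c = Fr (y mod t) c"
proof (rule poly_eqI)
  fix j assume c: "inRn t c"
  have "coeff c j ^ q ^ y = coeff c j ^ q ^ (y mod t)" by (rule pow_period[OF inRn_coeff[OF c]])
  then show "coeff (Fr y c) j = coeff (Fr (y mod t) c) j" by (simp only: Fr_coeff)
qed

definition Tr :: "'a poly \<Rightarrow> 'a poly" where "Tr c = (\<Sum>w<t. Fr w c)"

lemma Tr_deg: "degree (Tr c) < n"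
  unfolding Tr_def by (rule deg_lt_I) (simp add: coeff_sum Fr_coeff)
lemma Tr_add: "Tr (a + b) = Tr a + Tr b" unfolding Tr_def by (simp add: Fr_add sum.distrib)
lemma Tr_0: "Tr 0 = 0" unfolding Tr_def by (simp add: Fr_0)
lemma Tr_minus: "Tr (- a) = - Tr a" unfolding Tr_def by (simp add: Fr_minus sum_negf)
lemma Tr_diff: "Tr (a - b) = Tr a - Tr b" unfolding Tr_def by (simp add: Fr_diff sum_subtractf)
lemma Tr_supp: "degree c < n \<Longrightarrow> supp l c \<Longrightarrow> supp l (Tr c)"
  unfolding Tr_def by (intro supp_sum Fr_supp)
lemma Tr_inv: "degree c < n \<Longrightarrow> inv (Tr c) = Tr (inv c)"
  unfolding Tr_def by (simp add: inv_sum Fr_inv)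
lemma Tr_rmul: "inRn 1 u \<Longrightarrow> degree c < n \<Longrightarrow> Tr (rmul n u c) = rmul n u (Tr c)"
proof -
  assume u: "inRn 1 u" and c: "degree c < n"
  have "Fr w (rmul n u c) = rmul n u (Fr w c)" for w
    using Fr_rmul[OF inRn_deg[OF u] c, of w] Fr_id[OF u, of w] by simp
  then show ?thesis unfolding Tr_def by (simp add: rmul_sum)
qed

lemma sum_shift: "(\<And>y. f y = f (y mod t)) \<Longrightarrow> (\<Sum>w<t. f (w + s)) = (\<Sum>w<t. f w)"
proof -
  assume f: "\<And>y. f y = f (y mod t)"
  have bij: "bij_betw (\<lambda>w. (w + s) mod t) {..<t} {..<t}"
  proof -
    have inj: "inj_on (\<lambda>w. (w + s) mod t) {..<t}"
    proof (rule inj_onI)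
      fix x y assume x: "x \<in> {..<t}" and y: "y \<in> {..<t}" and e: "(x + s) mod t = (y + s) mod t"
      have "[x + s = y + s] (mod t)" using e by (simp add: cong_def)
      then have "[x = y] (mod t)" by (simp add: cong_add_rcancel_nat)
      then show "x = y" using x y by (simp add: cong_def)
    qed
    have sub: "(\<lambda>w. (w + s) mod t) ` {..<t} \<subseteq> {..<t}" using t2 by auto
    show ?thesis unfolding bij_betw_def using inj endo_inj_surj[OF _ sub inj] by simp
  qed
  have "(\<Sum>w<t. f (w + s)) = (\<Sum>w<t. f ((w + s) mod t))" using f by simp
  also have "\<dots> = (\<Sum>w<t. f w)" by (rule sum.reindex_bij_betw[OF bij])
  finally show ?thesis .
qed

lemma Tr_shift: "inRn t c \<Longrightarrow> Tr (Fr s c) = Tr c"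
proof -
  assume c: "inRn t c"
  have "Tr (Fr s c) = (\<Sum>w<t. Fr (w + s) c)" unfolding Tr_def by (simp add: Fr_Fr)
  also have "\<dots> = Tr c" unfolding Tr_def by (rule sum_shift) (rule Fr_period[OF c])
  finally show ?thesis .
qed

lemma Fr_fix_Rn: "degree x < n \<Longrightarrow> Fr w x = x \<Longrightarrow> inRn w x"
proof -
  assume d: "degree x < n" and f: "Fr w x = x"
  have "coeff x j ^ (q ^ w) = coeff x j" for j
  proof (cases "j < n")
    case True then show ?thesis using arg_cong[OF f, of "\<lambda>p. coeff p j"] by (simp add: Fr_coeff)
  next
    case False then have "coeff x j = 0" using d by (intro coeff_eq_0) simp
    then show ?thesis using q_pos by simp
  qed
  then show ?thesis using d unfolding Rn_def subF_def by simp
qed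

lemma Tr_Rq: "inRn t c \<Longrightarrow> inRn 1 (Tr c)"
proof -
  assume c: "inRn t c"
  have "Fr 1 (Tr c) = Tr (Fr 1 c)" unfolding Tr_def by (simp add: Fr_sum Fr_Fr add.commute)
  also have "\<dots> = Tr c" by (rule Tr_shift[OF c])
  finally show ?thesis by (rule Fr_fix_Rn[OF Tr_deg])
qed

end

context fsetup begin

lemma supp_disj: "cyc_coset n q l \<noteq> cyc_coset n q l' \<Longrightarrow> supp l x \<Longrightarrow> supp l' y \<Longrightarrow> rmul n x y = 0"
  by (rule S_ext[OF rmul_deg]) (use n coset_disj[of l l'] in \<open>auto simp: S_rmul supp_def S_0\<close>)

lemma smult_deg: "degree a < n \<Longrightarrow> degree (smult g a) < n"
  using degree_smult_le le_less_trans by blast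

lemma inv_smult: "degree a < n \<Longrightarrow> inv (smult g a) = smult g (inv a)"
proof -
  assume a: "degree a < n"
  show ?thesis by (rule S_ext[OF inv_deg smult_deg[OF inv_deg]])
    (simp only: S_inv[OF smult_deg[OF a]] S_smult S_inv[OF a])
qed

lemma inv_Rn: "inRn w a \<Longrightarrow> inRn w (inv a)" unfolding inv_def by (rule inRn_tau)
lemma Fr_Rn: "inRn w a \<Longrightarrow> inRn w (Fr s a)" unfolding Fr_def by (rule inRn_tau)


lemma form0_eq: "form0 n q t a b = Tr (rmul n a (inv b))"
  unfolding form0_def Tr_def Fr_def inv_def ..

lemma star_inner: "degree b < n \<Longrightarrow> (\<Sum>w\<in>{1..<t}. tau n (q ^ w) (-1) b) = Tr (inv b) - inv b"
proof -
  assume b: "degree b < n"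
  have "(\<Sum>w\<in>{1..<t}. tau n (q ^ w) (-1) b) = (\<Sum>w\<in>{1..<t}. Fr w (inv b))"
    using tauneg[OF b] by simp
  moreover have "Tr (inv b) = Fr 0 (inv b) + (\<Sum>w\<in>{1..<t}. Fr w (inv b))"
  proof -
    have "{..<t} = insert 0 {1..<t}" using t2 by auto
    then show ?thesis unfolding Tr_def by simp
  qed
  ultimately show ?thesis using Fr0[OF inv_deg] by simp
qed

lemma star_eq: "degree b < n \<Longrightarrow> form_star n q t a b = Tr (rmul n a (Tr (inv b) - inv b))"
  unfolding form_star_def star_inner Tr_def Fr_def ..

lemma gamma_eq: "degree b < n \<Longrightarrow> form_gamma n q t g a b = Tr (rmul n (smult g a) (Fr (t div 2) (inv b)))"
  unfolding form_gamma_def Tr_def by (simp add: tauneg Fr_def)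

lemma tau1_add: "tau n 1 v (a + b) = tau n 1 v a + tau n 1 v (b::'a poly)"
  using tau_add[of 0 v a b] by simp

lemma f0_addL: "form0 n q t ((x::'a poly) + y) z = form0 n q t x z + form0 n q t y z"
  unfolding form0_eq by (simp add: rmul_add_left Tr_add)
lemma f0_addR: "form0 n q t (x::'a poly) (y + z) = form0 n q t x y + form0 n q t x z"
  unfolding form0_eq by (simp add: inv_add rmul_add Tr_add)
lemma fs_addL: "form_star n q t ((x::'a poly) + y) z = form_star n q t x z + form_star n q t y z"
  unfolding form_star_def by (simp add: rmul_add_left tau_add sum.distrib)
lemma fs_addR: "form_star n q t (x::'a poly) (y + z) = form_star n q t x y + form_star n q t x z"
  unfolding form_star_def by (simp add: rmul_add tau_add sum.distrib)
lemma fg_addL: "form_gamma n q t g ((x::'a poly) + y) z = form_gamma n q t g x z + form_gamma n q t g y z"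
  unfolding form_gamma_def by (simp add: rmul_add_left tau_add sum.distrib smult_add_right)
lemma fg_addR: "form_gamma n q t g (x::'a poly) (y + z) = form_gamma n q t g x y + form_gamma n q t g x z"
  unfolding form_gamma_def by (simp add: rmul_add tau_add sum.distrib)
lemma fh_addL: "form_gammaH n q t g th ((x::'a poly) + y) z = form_gammaH n q t g th x z + form_gammaH n q t g th y z"
  unfolding form_gammaH_def by (simp add: fg_addL rmul_add)
lemma fh_addR: "form_gammaH n q t g th (x::'a poly) (y + z) = form_gammaH n q t g th x y + form_gammaH n q t g th x z"
  unfolding form_gammaH_def by (simp add: fg_addR rmul_add)

lemma f0_herm: "degree a < n \<Longrightarrow> degree b < n \<Longrightarrow> form0 n q t b a = inv (form0 n q t a b)"
proof -
  assume a: "degree a < n" and b: "degree b < n"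
  have "inv (form0 n q t a b) = Tr (inv (rmul n a (inv b)))" unfolding form0_eq by (rule Tr_inv[OF rmul_deg])
  also have "inv (rmul n a (inv b)) = rmul n (inv a) b" by (simp add: inv_rmul[OF a inv_deg] inv_inv[OF b])
  finally show ?thesis unfolding form0_eq by (simp add: rmul_comm)
qed

lemma f0_linL: "inRn 1 u \<Longrightarrow> form0 n q t (rmul n u a) b = rmul n u (form0 n q t a b)"
  unfolding form0_eq by (simp add: rmul_assoc Tr_rmul rmul_deg)

lemma f0_linR: "inRn 1 v \<Longrightarrow> degree b < n \<Longrightarrow> form0 n q t a (rmul n v b) = rmul n (inv v) (form0 n q t a b)"
proof -
  assume v: "inRn 1 v" and b: "degree b < n"
  have "rmul n a (inv (rmul n v b)) = rmul n (inv v) (rmul n a (inv b))"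
    using inv_rmul[OF inRn_deg[OF v] b] by (metis rmul_assoc rmul_comm)
  then show ?thesis unfolding form0_eq using Tr_rmul[OF inv_Rn[OF v] rmul_deg] by simp
qed

lemma star_alt: "inRn t a \<Longrightarrow> inRn t b \<Longrightarrow> form_star n q t a b = rmul n (Tr (inv b)) (Tr a) - form0 n q t a b"
proof -
  assume a: "inRn t a" and b: "inRn t b"
  have T: "inRn 1 (Tr (inv b))" by (rule Tr_Rq[OF inv_Rn[OF b]])
  have "form_star n q t a b = Tr (rmul n a (Tr (inv b))) - Tr (rmul n a (inv b))"
    unfolding star_eq[OF inRn_deg[OF b]] by (simp add: rmul_diff Tr_diff)
  also have "Tr (rmul n a (Tr (inv b))) = rmul n (Tr (inv b)) (Tr a)"
    using Tr_rmul[OF T inRn_deg[OF a]] by (simp add: rmul_comm)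
  finally show ?thesis unfolding form0_eq .
qed

lemma fs_herm: "inRn t a \<Longrightarrow> inRn t b \<Longrightarrow> form_star n q t b a = inv (form_star n q t a b)"
proof -
  assume a: "inRn t a" and b: "inRn t b"
  have da: "degree a < n" and db: "degree b < n" using a b inRn_deg by auto
  have "inv (form_star n q t a b) = inv (rmul n (Tr (inv b)) (Tr a)) - inv (form0 n q t a b)"
    unfolding star_alt[OF a b] by (rule inv_diff)
  also have "inv (rmul n (Tr (inv b)) (Tr a)) = rmul n (Tr b) (Tr (inv a))"
    by (simp add: inv_rmul[OF Tr_deg Tr_deg] Tr_inv[OF inv_deg] Tr_inv[OF da] inv_inv[OF db])
  also have "inv (form0 n q t a b) = form0 n q t b a" by (rule f0_herm[OF da db, symmetric])
  finally show ?thesis unfolding star_alt[OF b a] by (simp add: rmul_comm)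
qed

lemma fs_linL: "inRn 1 u \<Longrightarrow> degree b < n \<Longrightarrow> form_star n q t (rmul n u a) b = rmul n u (form_star n q t a b)"
  unfolding star_eq by (simp add: rmul_assoc Tr_rmul rmul_deg)

lemma fs_linR: "inRn 1 v \<Longrightarrow> degree b < n \<Longrightarrow> form_star n q t a (rmul n v b) = rmul n (inv v) (form_star n q t a b)"
proof -
  assume v: "inRn 1 v" and b: "degree b < n"
  have iv: "inRn 1 (inv v)" by (rule inv_Rn[OF v])
  have "Tr (inv (rmul n v b)) - inv (rmul n v b) = rmul n (inv v) (Tr (inv b) - inv b)"
    using inv_rmul[OF inRn_deg[OF v] b] Tr_rmul[OF iv inv_deg] by (simp add: rmul_diff)
  then have "rmul n a (Tr (inv (rmul n v b)) - inv (rmul n v b)) = rmul n (inv v) (rmul n a (Tr (inv b) - inv b))"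
    by (metis rmul_assoc rmul_comm)
  then show ?thesis unfolding star_eq[OF b] star_eq[OF rmul_deg] using Tr_rmul[OF iv rmul_deg] by simp
qed

context
  fixes g :: 'a
  assumes ev: "even t" and gs: "g ^ (q ^ (t div 2)) = - g"
begin

lemma g_t: "g \<in> subF (q ^ t)"
proof -
  have "t = t div 2 + t div 2" using ev by auto
  then have "g ^ (q ^ t) = (g ^ (q ^ (t div 2))) ^ (q ^ (t div 2))"
    by (metis power_add power_mult)
  also have "\<dots> = g" using gs fr_uminus[of g "t div 2"] by simp
  finally show ?thesis unfolding subF_def by simp
qed

lemma fg_herm: "inRn t a \<Longrightarrow> inRn t b \<Longrightarrow> form_gamma n q t g b a = - inv (form_gamma n q t g a b)"
proof -
  assume a: "inRn t a" and b: "inRn t b"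
  have da: "degree a < n" and db: "degree b < n" using a b inRn_deg by auto
  let ?s = "t div 2"
  let ?X = "rmul n (smult g b) (Fr ?s (inv a))"
  have X: "inRn t ?X"
    by (rule inRn_rmul[OF inRn_smult[OF g_t b] Fr_Rn[OF inv_Rn[OF a]]])
  have "form_gamma n q t g b a = Tr ?X" by (rule gamma_eq[OF da])
  also have "\<dots> = Tr (Fr ?s ?X)" by (rule Tr_shift[OF X, symmetric])
  also have "Fr ?s ?X = rmul n (Fr ?s (smult g b)) (Fr ?s (Fr ?s (inv a)))"
    by (rule Fr_rmul[OF smult_deg[OF db] Fr_deg])
  also have "Fr ?s (smult g b) = smult (- g) (Fr ?s b)" using Fr_smult[OF db] gs by simp
  also have "Fr ?s (Fr ?s (inv a)) = inv a"
  proof -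
    have "Fr ?s (Fr ?s (inv a)) = Fr (?s + ?s) (inv a)" by (rule Fr_Fr)
    also have "\<dots> = Fr ((?s + ?s) mod t) (inv a)" by (rule Fr_period[OF inv_Rn[OF a]])
    also have "(?s + ?s) mod t = 0"
    proof -
      have "?s + ?s = t" using ev by (elim evenE) simp
      then show ?thesis by simp
    qed
    finally show ?thesis using Fr0[OF inv_deg] by simp
  qed
  finally have L: "form_gamma n q t g b a = - Tr (smult g (rmul n (inv a) (Fr ?s b)))"
    by (simp add: rmul_smult_left rmul_smult rmul_minus rmul_comm Tr_minus)
  have "inv (form_gamma n q t g a b) = Tr (inv (rmul n (smult g a) (Fr ?s (inv b))))"
    unfolding gamma_eq[OF db] by (rule Tr_inv[OF rmul_deg])
  also have "inv (rmul n (smult g a) (Fr ?s (inv b))) = rmul n (smult g (inv a)) (Fr ?s b)"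
    using inv_rmul[OF smult_deg[OF da] Fr_deg] inv_smult[OF da] Fr_inv[OF inv_deg, of ?s b] inv_inv[OF db]
    by simp
  finally show ?thesis using L by (simp add: rmul_smult_left)
qed

lemma fg_linL: "inRn 1 u \<Longrightarrow> degree b < n \<Longrightarrow> form_gamma n q t g (rmul n u a) b = rmul n u (form_gamma n q t g a b)"
proof -
  assume u: "inRn 1 u" and b: "degree b < n"
  let ?Y = "Fr (t div 2) (inv b)"
  have "rmul n (smult g (rmul n u a)) ?Y = rmul n u (rmul n (smult g a) ?Y)"
    by (simp only: rmul_smult_left rmul_smult rmul_assoc)
  then show ?thesis unfolding gamma_eq[OF b] using Tr_rmul[OF u rmul_deg] by simp
qed

lemma fg_linR: "inRn 1 v \<Longrightarrow> degree b < n \<Longrightarrow> form_gamma n q t g a (rmul n v b) = rmul n (inv v) (form_gamma n q t g a b)"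
proof -
  assume v: "inRn 1 v" and b: "degree b < n"
  have iv: "inRn 1 (inv v)" by (rule inv_Rn[OF v])
  have "Fr (t div 2) (inv (rmul n v b)) = rmul n (inv v) (Fr (t div 2) (inv b))"
    using inv_rmul[OF inRn_deg[OF v] b] Fr_rmul[OF inv_deg inv_deg] Fr_id[OF iv] by simp
  then have "rmul n (smult g a) (Fr (t div 2) (inv (rmul n v b))) = rmul n (inv v) (rmul n (smult g a) (Fr (t div 2) (inv b)))"
    by (metis rmul_assoc rmul_comm)
  then show ?thesis unfolding gamma_eq[OF b] gamma_eq[OF rmul_deg] using Tr_rmul[OF iv rmul_deg] by simp
qed

lemma fg_deg: "degree b < n \<Longrightarrow> degree (form_gamma n q t g a b) < n"
  unfolding gamma_eq by (rule Tr_deg)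

context
  fixes th :: "'a poly"
  assumes th: "inRn 1 th"
begin

lemma fh_eq: "form_gammaH n q t g th a b = rmul n (th - inv th) (form_gamma n q t g a b)"
  unfolding form_gammaH_def inv_def ..

lemma chi_Rq: "inRn 1 (th - inv th)" by (rule inRn_diff[OF th inv_Rn[OF th]])
lemma chi_inv: "inv (th - inv th) = - (th - inv th)"
  using inv_inv[OF inRn_deg[OF th]] by (simp add: inv_diff)

lemma fh_herm: "inRn t a \<Longrightarrow> inRn t b \<Longrightarrow> form_gammaH n q t g th b a = inv (form_gammaH n q t g th a b)"
proof -
  assume a: "inRn t a" and b: "inRn t b"
  have "inv (form_gammaH n q t g th a b) = rmul n (inv (th - inv th)) (inv (form_gamma n q t g a b))"
    unfolding fh_eq by (rule inv_rmul[OF inRn_deg[OF chi_Rq] fg_deg[OF inRn_deg[OF b]]])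
  also have "\<dots> = rmul n (th - inv th) (form_gamma n q t g b a)"
    unfolding chi_inv fg_herm[OF a b] by (simp only: rmul_minus rmul_minus_left minus_minus)
  finally show ?thesis unfolding fh_eq by simp
qed

lemma fh_linL: "inRn 1 u \<Longrightarrow> degree b < n \<Longrightarrow> form_gammaH n q t g th (rmul n u a) b = rmul n u (form_gammaH n q t g th a b)"
  unfolding fh_eq by (simp add: fg_linL) (metis rmul_assoc rmul_comm)

lemma fh_linR: "inRn 1 v \<Longrightarrow> degree b < n \<Longrightarrow> form_gammaH n q t g th a (rmul n v b) = rmul n (inv v) (form_gammaH n q t g th a b)"
  unfolding fh_eq by (simp add: fg_linR) (metis rmul_assoc rmul_comm)

end

end

end

context fsetup begin

definition Bgood :: "('a poly \<Rightarrow> 'a poly \<Rightarrow> 'a poly) \<Rightarrow> nat \<Rightarrow> bool" where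
 "Bgood B l \<longleftrightarrow>
   (\<forall>x y z. B (x + y) z = B x z + B y z) \<and> (\<forall>x y z. B x (y + z) = B x y + B x z) \<and>
   (\<forall>a\<in>JJ l. \<forall>a'\<in>JJ l. B a a' = 0) \<and> (\<forall>b\<in>JJ (negmod n l). \<forall>b'\<in>JJ (negmod n l). B b b' = 0) \<and>
   (\<forall>a\<in>JJ l. \<forall>b\<in>JJ (negmod n l). B a b \<in> KK l) \<and>
   (\<forall>a\<in>JJ l. \<forall>b\<in>JJ (negmod n l). B b a = inv (B a b)) \<and>
   (\<forall>u\<in>KK l. \<forall>a\<in>JJ l. \<forall>b\<in>JJ (negmod n l). B (rmul n u a) b = rmul n u (B a b)) \<and>
   (\<forall>v\<in>KK (negmod n l). \<forall>a\<in>JJ l. \<forall>b\<in>JJ (negmod n l). B a (rmul n v b) = rmul n (inv v) (B a b))"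

context
  fixes l :: nat
  assumes cne: "cyc_coset n q l \<noteq> cyc_coset n q (negmod n l)"
begin

lemma cne': "cyc_coset n q (negmod n l) \<noteq> cyc_coset n q l" using cne by simp

lemma zero1: "a \<in> JJ l \<Longrightarrow> a' \<in> JJ l \<Longrightarrow> supp (negmod n l) y \<Longrightarrow> rmul n a y = 0"
  by (rule supp_disj[OF cne JJ_supp])
lemma zero1s: "a \<in> JJ l \<Longrightarrow> supp (negmod n l) y \<Longrightarrow> rmul n (smult g a) y = 0"
  by (rule supp_disj[OF cne supp_smult[OF JJ_supp]])
lemma zero2: "b \<in> JJ (negmod n l) \<Longrightarrow> supp l y \<Longrightarrow> rmul n b y = 0"
  by (rule supp_disj[OF cne' JJ_supp])
lemma zero2s: "b \<in> JJ (negmod n l) \<Longrightarrow> supp l y \<Longrightarrow> rmul n (smult g b) y = 0"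
  by (rule supp_disj[OF cne' supp_smult[OF JJ_supp]])

lemma invJ1: "a \<in> JJ l \<Longrightarrow> supp (negmod n l) (inv a)"
  by (rule inv_supp[OF JJ_deg JJ_supp])
lemma invJ2: "b \<in> JJ (negmod n l) \<Longrightarrow> supp l (inv b)"
  by (rule inv_supp2[OF JJ_deg JJ_supp])

lemma Bgood0: "Bgood (form0 n q t) l"
  unfolding Bgood_def
proof (intro conjI ballI allI)
  fix x y z :: "'a poly"
  show "form0 n q t (x + y) z = form0 n q t x z + form0 n q t y z" by (rule f0_addL)
  show "form0 n q t x (y + z) = form0 n q t x y + form0 n q t x z" by (rule f0_addR)
next
  fix a a' assume "a \<in> JJ l" "a' \<in> JJ l"
  then show "form0 n q t a a' = 0" unfolding form0_eq using zero1 invJ1 Tr_0 by metis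
next
  fix b b' assume "b \<in> JJ (negmod n l)" "b' \<in> JJ (negmod n l)"
  then show "form0 n q t b b' = 0" unfolding form0_eq using zero2 invJ2 Tr_0 by metis
next
  fix a b assume a: "a \<in> JJ l" and b: "b \<in> JJ (negmod n l)"
  show "form0 n q t a b \<in> KK l" unfolding form0_eq
    by (rule KK_char[OF Tr_Rq[OF inRn_rmul[OF JJ_Rt[OF a] inv_Rn[OF JJ_Rt[OF b]]]]
          Tr_supp[OF rmul_deg supp_rmul[OF JJ_supp[OF a]]]])
  show "form0 n q t b a = inv (form0 n q t a b)" by (rule f0_herm[OF JJ_deg[OF a] JJ_deg[OF b]])
next
  fix u a b assume "u \<in> KK l" "a \<in> JJ l" "b \<in> JJ (negmod n l)"
  then show "form0 n q t (rmul n u a) b = rmul n u (form0 n q t a b)" using f0_linL KK_Rq by blast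
next
  fix v a b assume "v \<in> KK (negmod n l)" "a \<in> JJ l" "b \<in> JJ (negmod n l)"
  then show "form0 n q t a (rmul n v b) = rmul n (inv v) (form0 n q t a b)" using f0_linR KK_Rq JJ_deg by blast
qed

lemma Bgood_star: "Bgood (form_star n q t) l"
  unfolding Bgood_def
proof (intro conjI ballI allI)
  fix x y z :: "'a poly"
  show "form_star n q t (x + y) z = form_star n q t x z + form_star n q t y z" by (rule fs_addL)
  show "form_star n q t x (y + z) = form_star n q t x y + form_star n q t x z" by (rule fs_addR)
next
  fix a a' assume a: "a \<in> JJ l" and a': "a' \<in> JJ l"
  have "supp (negmod n l) (Tr (inv a') - inv a')"
    by (rule supp_diff[OF Tr_supp[OF inv_deg invJ1[OF a']] invJ1[OF a']])
  then show "form_star n q t a a' = 0" unfolding star_eq[OF JJ_deg[OF a']]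
    using zero1[OF a a'] Tr_0 by simp
next
  fix b b' assume b: "b \<in> JJ (negmod n l)" and b': "b' \<in> JJ (negmod n l)"
  have "supp l (Tr (inv b') - inv b')"
    by (rule supp_diff[OF Tr_supp[OF inv_deg invJ2[OF b']] invJ2[OF b']])
  then show "form_star n q t b b' = 0" unfolding star_eq[OF JJ_deg[OF b']]
    using zero2[OF b] Tr_0 by simp
next
  fix a b assume a: "a \<in> JJ l" and b: "b \<in> JJ (negmod n l)"
  have i: "inRn t (Tr (inv b) - inv b)"
    by (rule inRn_diff[OF inRn_mono[OF Tr_Rq[OF inv_Rn[OF JJ_Rt[OF b]]]] inv_Rn[OF JJ_Rt[OF b]]])
  show "form_star n q t a b \<in> KK l" unfolding star_eq[OF JJ_deg[OF b]]
    by (rule KK_char[OF Tr_Rq[OF inRn_rmul[OF JJ_Rt[OF a] i]]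
          Tr_supp[OF rmul_deg supp_rmul[OF JJ_supp[OF a]]]])
  show "form_star n q t b a = inv (form_star n q t a b)" by (rule fs_herm[OF JJ_Rt[OF a] JJ_Rt[OF b]])
next
  fix u a b assume "u \<in> KK l" "a \<in> JJ l" "b \<in> JJ (negmod n l)"
  then show "form_star n q t (rmul n u a) b = rmul n u (form_star n q t a b)" using fs_linL KK_Rq JJ_deg by blast
next
  fix v a b assume "v \<in> KK (negmod n l)" "a \<in> JJ l" "b \<in> JJ (negmod n l)"
  then show "form_star n q t a (rmul n v b) = rmul n (inv v) (form_star n q t a b)" using fs_linR KK_Rq JJ_deg by blast
qed

lemma Bgood_gammaH:
  assumes ev: "even t" and gs: "g ^ (q ^ (t div 2)) = - g" and th: "th \<in> KK l"
  shows "Bgood (form_gammaH n q t g th) l"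
  unfolding Bgood_def
proof (intro conjI ballI allI)
  have thR: "inRn 1 th" by (rule KK_Rq[OF th])
  fix x y z :: "'a poly"
  show "form_gammaH n q t g th (x + y) z = form_gammaH n q t g th x z + form_gammaH n q t g th y z" by (rule fh_addL)
  show "form_gammaH n q t g th x (y + z) = form_gammaH n q t g th x y + form_gammaH n q t g th x z" by (rule fh_addR)
next
  fix a a' assume a: "a \<in> JJ l" and a': "a' \<in> JJ l"
  have "supp (negmod n l) (Fr (t div 2) (inv a'))" by (rule Fr_supp[OF inv_deg invJ1[OF a']])
  then show "form_gammaH n q t g th a a' = 0"
    unfolding fh_eq[OF ev gs KK_Rq[OF th]] gamma_eq[OF JJ_deg[OF a']] using zero1s[OF a] Tr_0 rmul_0 by simp
next
  fix b b' assume b: "b \<in> JJ (negmod n l)" and b': "b' \<in> JJ (negmod n l)"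
  have "supp l (Fr (t div 2) (inv b'))" by (rule Fr_supp[OF inv_deg invJ2[OF b']])
  then show "form_gammaH n q t g th b b' = 0"
    unfolding fh_eq[OF ev gs KK_Rq[OF th]] gamma_eq[OF JJ_deg[OF b']] using zero2s[OF b] Tr_0 rmul_0 by simp
next
  have thR: "inRn 1 th" by (rule KK_Rq[OF th])
  fix a b assume a: "a \<in> JJ l" and b: "b \<in> JJ (negmod n l)"
  have i: "inRn t (rmul n (smult g a) (Fr (t div 2) (inv b)))"
    by (rule inRn_rmul[OF inRn_smult[OF g_t[OF ev gs] JJ_Rt[OF a]] Fr_Rn[OF inv_Rn[OF JJ_Rt[OF b]]]])
  have "form_gamma n q t g a b \<in> KK l" unfolding gamma_eq[OF JJ_deg[OF b]]
    by (rule KK_char[OF Tr_Rq[OF i] Tr_supp[OF rmul_deg supp_rmul[OF supp_smult[OF JJ_supp[OF a]]]]])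
  then show "form_gammaH n q t g th a b \<in> KK l" unfolding fh_eq[OF ev gs thR]
    by (rule KK_rmul[OF chi_Rq[OF ev gs thR]])
  show "form_gammaH n q t g th b a = inv (form_gammaH n q t g th a b)"
    by (rule fh_herm[OF ev gs thR JJ_Rt[OF a] JJ_Rt[OF b]])
next
  have thR: "inRn 1 th" by (rule KK_Rq[OF th])
  fix u a b assume "u \<in> KK l" "a \<in> JJ l" "b \<in> JJ (negmod n l)"
  then show "form_gammaH n q t g th (rmul n u a) b = rmul n u (form_gammaH n q t g th a b)"
    using fh_linL[OF ev gs thR] KK_Rq JJ_deg by blast
next
  have thR: "inRn 1 th" by (rule KK_Rq[OF th])
  fix v a b assume "v \<in> KK (negmod n l)" "a \<in> JJ l" "b \<in> JJ (negmod n l)"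
  then show "form_gammaH n q t g th a (rmul n v b) = rmul n (inv v) (form_gammaH n q t g th a b)"
    using fh_linR[OF ev gs thR] KK_Rq JJ_deg by blast
qed

end
end

context fsetup begin
context
  fixes l :: nat
  assumes cne: "cyc_coset n q l \<noteq> cyc_coset n q (negmod n l)"
begin

lemma E1J: "a \<in> JJ l \<Longrightarrow> rmul n (EE l) a = a" by (rule EE_id[OF JJ_deg JJ_supp])
lemma E2J: "b \<in> JJ (negmod n l) \<Longrightarrow> rmul n (EE (negmod n l)) b = b" by (rule EE_id[OF JJ_deg JJ_supp])
lemma E1kill: "b \<in> JJ (negmod n l) \<Longrightarrow> rmul n (EE l) b = 0" by (rule EE_kill[OF cne JJ_supp])
lemma E2kill: "a \<in> JJ l \<Longrightarrow> rmul n (EE (negmod n l)) a = 0" by (rule EE_kill[OF cne'[OF cne] JJ_supp])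
lemma invK1: "u \<in> KK l \<Longrightarrow> inv u \<in> KK (negmod n l)"
  by (rule KK_char[OF inv_Rn[OF KK_Rq] inv_supp[OF KK_deg KK_supp]])
lemma invK2: "u \<in> KK (negmod n l) \<Longrightarrow> inv u \<in> KK l"
  by (rule KK_char[OF inv_Rn[OF KK_Rq] inv_supp2[OF KK_deg KK_supp]])
lemma invinvK: "u \<in> KK m \<Longrightarrow> inv (inv u) = u" by (rule inv_inv[OF KK_deg])
lemma invE1: "inv (EE l) = EE (negmod n l)"
proof (rule S_ext[OF inv_deg KK_deg[OF EE(1)]])
  fix z show "S (inv (EE l)) z = S (EE (negmod n l)) z"
    by (simp add: S_inv[OF KK_deg[OF EE(1)]] S_EE inC_neg)
qed
lemma invE2: "inv (EE (negmod n l)) = EE l"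
  using invE1 invinvK[OF EE(1), of l] by simp

lemma comp: "s1 \<in> KK l \<Longrightarrow> s2 \<in> KK (negmod n l) \<Longrightarrow> rmul n (EE l) (s1 + s2) = s1"
  by (simp add: rmul_add E1J[OF KK_JJ] E1kill[OF KK_JJ])
lemma comp0: "s1 \<in> KK l \<Longrightarrow> s2 \<in> KK (negmod n l) \<Longrightarrow> s1 + s2 = 0 \<Longrightarrow> s1 = 0"
  using comp rmul_0 by metis
lemma compE: "s1 \<in> KK l \<Longrightarrow> s2 \<in> KK (negmod n l) \<Longrightarrow> s1 + s2 = EE l + EE (negmod n l) \<Longrightarrow> s1 = EE l"
  using comp[of s1 s2] comp[OF EE(1) EE(1)] by metis
lemma sum_nz: "a \<in> JJ l \<Longrightarrow> b \<in> JJ (negmod n l) \<Longrightarrow> a \<noteq> 0 \<Longrightarrow> a + b \<noteq> 0"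
proof
  assume a: "a \<in> JJ l" "a \<noteq> 0" and b: "b \<in> JJ (negmod n l)" and s: "a + b = 0"
  have "rmul n (EE l) (a + b) = a" by (simp add: rmul_add E1J[OF a(1)] E1kill[OF b])
  then show False using s a(2) rmul_0 by metis
qed

context
  fixes B :: "'a poly \<Rightarrow> 'a poly \<Rightarrow> 'a poly"
  assumes Bg: "Bgood B l"
begin

lemma BaddL: "B (x + y) z = B x z + B y z" using Bg unfolding Bgood_def by blast
lemma BaddR: "B x (y + z) = B x y + B x z" using Bg unfolding Bgood_def by blast
lemma Bz1: "a \<in> JJ l \<Longrightarrow> a' \<in> JJ l \<Longrightarrow> B a a' = 0" using Bg unfolding Bgood_def by blast
lemma Bz2: "b \<in> JJ (negmod n l) \<Longrightarrow> b' \<in> JJ (negmod n l) \<Longrightarrow> B b b' = 0" using Bg unfolding Bgood_def by blast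
lemma BK: "a \<in> JJ l \<Longrightarrow> b \<in> JJ (negmod n l) \<Longrightarrow> B a b \<in> KK l" using Bg unfolding Bgood_def by blast
lemma Bherm: "a \<in> JJ l \<Longrightarrow> b \<in> JJ (negmod n l) \<Longrightarrow> B b a = inv (B a b)" using Bg unfolding Bgood_def by blast
lemma BlinL: "u \<in> KK l \<Longrightarrow> a \<in> JJ l \<Longrightarrow> b \<in> JJ (negmod n l) \<Longrightarrow> B (rmul n u a) b = rmul n u (B a b)"
  using Bg unfolding Bgood_def by blast
lemma BlinR: "v \<in> KK (negmod n l) \<Longrightarrow> a \<in> JJ l \<Longrightarrow> b \<in> JJ (negmod n l) \<Longrightarrow> B a (rmul n v b) = rmul n (inv v) (B a b)"
  using Bg unfolding Bgood_def by blast

lemma B0L: "B 0 y = 0"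
proof -
  have "B (0 + 0) y = B 0 y + B 0 y" by (rule BaddL)
  then have "B 0 y + B 0 y = B 0 y + 0" by simp
  then show ?thesis by (rule add_left_imp_eq)
qed
lemma B0R: "B x 0 = 0"
proof -
  have "B x (0 + 0) = B x 0 + B x 0" by (rule BaddR)
  then have "B x 0 + B x 0 = B x 0 + 0" by simp
  then show ?thesis by (rule add_left_imp_eq)
qed

lemma BK2: "a \<in> JJ l \<Longrightarrow> b \<in> JJ (negmod n l) \<Longrightarrow> B b a \<in> KK (negmod n l)"
  using Bherm invK1 BK by simp

lemma Bexp: "a \<in> JJ l \<Longrightarrow> a' \<in> JJ l \<Longrightarrow> b \<in> JJ (negmod n l) \<Longrightarrow> b' \<in> JJ (negmod n l) \<Longrightarrow>
  B (a + b) (a' + b') = B a b' + B b a'"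
  by (simp add: BaddL BaddR Bz1 Bz2)

lemma iso_iff: "a \<in> JJ l \<Longrightarrow> b \<in> JJ (negmod n l) \<Longrightarrow> B (a + b) (a + b) = 0 \<longleftrightarrow> B a b = 0"
proof
  assume a: "a \<in> JJ l" and b: "b \<in> JJ (negmod n l)" and "B (a + b) (a + b) = 0"
  then have "B a b + B b a = 0" using Bexp by simp
  then show "B a b = 0" using comp0[OF BK[OF a b] BK2[OF a b]] by simp
next
  assume a: "a \<in> JJ l" and b: "b \<in> JJ (negmod n l)" and "B a b = 0"
  then show "B (a + b) (a + b) = 0" using Bexp[OF a a b b] Bherm[OF a b] inv_0 by simp
qed

end
end
end

context fsetup begin

lemma basis_nz:
  fixes d :: nat
  assumes bJ: "\<forall>j<d. b j \<in> JJ m"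
    and ind: "\<forall>c. (\<forall>j<d. c j \<in> KK m) \<longrightarrow> (\<Sum>j<d. rmul n (c j) (b j)) = 0 \<longrightarrow> (\<forall>j<d. c j = 0)"
    and i: "i < d"
  shows "b i \<noteq> 0"
proof
  assume bi: "b i = 0"
  let ?c = "\<lambda>j. if j = i then EE m else 0"
  have "(\<Sum>j<d. rmul n (?c j) (b j)) = (\<Sum>j<d. if j = i then rmul n (EE m) (b j) else 0)"
    by (intro sum.cong refl) (simp add: rmul_0_left)
  also have "\<dots> = rmul n (EE m) (b i)" using i by (simp add: sum.delta sum.delta')
  also have "\<dots> = 0" using bi rmul_0 by simp
  finally have s0: "(\<Sum>j<d. rmul n (?c j) (b j)) = 0" .
  have cK: "\<forall>j<d. ?c j \<in> KK m" using KK_0 EE(1) by simp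
  have "\<forall>j<d. ?c j = 0" using mp[OF mp[OF spec[OF ind, of ?c] cK] s0] .
  then show False using i EE_nz[of m] by auto
qed

lemma sum2: "(r::nat) \<ge> 2 \<Longrightarrow> (\<forall>j. j \<noteq> 0 \<and> j \<noteq> 1 \<longrightarrow> f j = 0) \<Longrightarrow> (\<Sum>j<r. f j) = f 0 + (f 1 :: 'a poly)"
proof -
  assume r: "r \<ge> 2" and f: "\<forall>j. j \<noteq> 0 \<and> j \<noteq> 1 \<longrightarrow> f j = 0"
  have "(\<Sum>j<r. f j) = (\<Sum>j\<in>{0,1}. f j)"
    by (rule sum.mono_neutral_right) (use r f in auto)
  then show ?thesis by simp
qed

context
  fixes l :: nat
  assumes cne: "cyc_coset n q l \<noteq> cyc_coset n q (negmod n l)"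
begin

context
  fixes B :: "'a poly \<Rightarrow> 'a poly \<Rightarrow> 'a poly"
  assumes Bg: "Bgood B l"
begin

lemma iso_exists:
  fixes r :: nat
  assumes ksB: "ksubspace n (KK (negmod n l)) (JJ (negmod n l)) Amh"
    and kdB: "kdim n (KK (negmod n l)) Amh r" and r: "r \<ge> 2"
    and a: "a \<in> JJ l" "a \<noteq> 0"
  shows "\<exists>b\<in>Amh. b \<noteq> 0 \<and> B a b = 0"
proof -
  let ?m = "negmod n l"
  obtain \<beta> where bA: "\<forall>j<r. \<beta> j \<in> Amh"
    and ind: "\<forall>c. (\<forall>j<r. c j \<in> KK ?m) \<longrightarrow> (\<Sum>j<r. rmul n (c j) (\<beta> j)) = 0 \<longrightarrow> (\<forall>j<r. c j = 0)"
    using kdB unfolding kdim_def by blast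
  have AJ: "Amh \<subseteq> JJ ?m" using ksB unfolding ksubspace_def by blast
  have bJ: "\<forall>j<r. \<beta> j \<in> JJ ?m" using bA AJ by blast
  have addA: "\<And>x y. x \<in> Amh \<Longrightarrow> y \<in> Amh \<Longrightarrow> x + y \<in> Amh" using ksB unfolding ksubspace_def by blast
  have mulA: "\<And>u x. u \<in> KK ?m \<Longrightarrow> x \<in> Amh \<Longrightarrow> rmul n u x \<in> Amh" using ksB unfolding ksubspace_def by blast
  have b0: "\<beta> 0 \<in> Amh" "\<beta> 0 \<in> JJ ?m" "\<beta> 0 \<noteq> 0" using bA bJ r basis_nz[OF bJ ind, of 0] by auto
  have b1: "\<beta> 1 \<in> Amh" "\<beta> 1 \<in> JJ ?m" using bA bJ r by auto
  let ?s0 = "B a (\<beta> 0)" and ?s1 = "B a (\<beta> 1)"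
  have s0K: "?s0 \<in> KK l" and s1K: "?s1 \<in> KK l" using BK[OF cne Bg a(1)] b0 b1 by auto
  show ?thesis
  proof (cases "?s0 = 0")
    case True then show ?thesis using b0 by blast
  next
    case False
    obtain z where z: "z \<in> KK l" "rmul n z ?s0 = EE l" using KK_inv[OF s0K False] by blast
    let ?c0 = "inv (- rmul n ?s1 z)"
    have mK: "- rmul n ?s1 z \<in> KK l" by (rule KK_minus[OF KK_rmul[OF KK_Rq[OF s1K] z(1)]])
    have c0K: "?c0 \<in> KK ?m" by (rule invK1[OF cne mK])
    let ?b = "rmul n ?c0 (\<beta> 0) + rmul n (EE ?m) (\<beta> 1)"
    have bA': "?b \<in> Amh" by (rule addA[OF mulA[OF c0K b0(1)] mulA[OF EE(1) b1(1)]])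
    let ?cc = "\<lambda>j. if j = 0 then ?c0 else if j = 1 then EE ?m else 0"
    have sumb: "(\<Sum>j<r. rmul n (?cc j) (\<beta> j)) = ?b"
      using sum2[OF r, of "\<lambda>j. rmul n (?cc j) (\<beta> j)"] by (simp add: rmul_0_left)
    have bnz: "?b \<noteq> 0"
    proof
      assume "?b = 0"
      then have s0: "(\<Sum>j<r. rmul n (?cc j) (\<beta> j)) = 0" using sumb by simp
      have cK: "\<forall>j<r. ?cc j \<in> KK ?m" using KK_0 EE(1) c0K by simp
      have all: "\<forall>j<r. ?cc j = 0" using mp[OF mp[OF spec[OF ind, of ?cc] cK] s0] .
      have r1: "(1::nat) < r" using r by simp
      have "EE ?m = 0" using mp[OF spec[OF all, of 1] r1] by simp
      then show False using EE_nz by blast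
    qed
    have "B a ?b = B a (rmul n ?c0 (\<beta> 0)) + B a (rmul n (EE ?m) (\<beta> 1))" by (rule BaddR[OF cne Bg])
    also have "\<dots> = rmul n (inv ?c0) ?s0 + rmul n (inv (EE ?m)) ?s1"
      using BlinR[OF cne Bg c0K a(1) b0(2)] BlinR[OF cne Bg EE(1) a(1) b1(2)] by simp
    also have "inv ?c0 = - rmul n ?s1 z" by (rule invinvK[OF cne mK])
    also have "inv (EE ?m) = EE l" by (rule invE2[OF cne])
    also have "rmul n (- rmul n ?s1 z) ?s0 = - ?s1"
    proof -
      have "rmul n (rmul n ?s1 z) ?s0 = rmul n ?s1 (rmul n z ?s0)" by (rule rmul_assoc)
      also have "\<dots> = ?s1" unfolding z(2) using E1J[OF cne KK_JJ[OF s1K]] rmul_comm by metis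
      finally show ?thesis by (simp add: rmul_minus_left)
    qed
    also have "rmul n (EE l) ?s1 = ?s1" by (rule E1J[OF cne KK_JJ[OF s1K]])
    finally have "B a ?b = 0" by simp
    then show ?thesis using bA' bnz by blast
  qed
qed

end
end
end

context fsetup begin
context
  fixes l :: nat
  assumes cne: "cyc_coset n q l \<noteq> cyc_coset n q (negmod n l)"
begin
context
  fixes B :: "'a poly \<Rightarrow> 'a poly \<Rightarrow> 'a poly"
  assumes Bg: "Bgood B l"
begin
context
  fixes Ah Amh :: "'a poly set" and ll r :: nat
  assumes ksA: "ksubspace n (KK l) (JJ l) Ah" and kdA: "kdim n (KK l) Ah ll"
    and ksB: "ksubspace n (KK (negmod n l)) (JJ (negmod n l)) Amh" and kdB: "kdim n (KK (negmod n l)) Amh r"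
    and nd: "nondeg B (dsum Ah Amh)"
begin

lemma AJ: "a \<in> Ah \<Longrightarrow> a \<in> JJ l" using ksA unfolding ksubspace_def by blast
lemma BJ: "b \<in> Amh \<Longrightarrow> b \<in> JJ (negmod n l)" using ksB unfolding ksubspace_def by blast
lemma A0: "0 \<in> Ah" using ksA unfolding ksubspace_def by blast
lemma B0: "0 \<in> Amh" using ksB unfolding ksubspace_def by blast
lemma addA: "x \<in> Ah \<Longrightarrow> y \<in> Ah \<Longrightarrow> x + y \<in> Ah" using ksA unfolding ksubspace_def by blast
lemma addB: "x \<in> Amh \<Longrightarrow> y \<in> Amh \<Longrightarrow> x + y \<in> Amh" using ksB unfolding ksubspace_def by blast
lemma mulA: "u \<in> KK l \<Longrightarrow> x \<in> Ah \<Longrightarrow> rmul n u x \<in> Ah" using ksA unfolding ksubspace_def by blast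
lemma mulB: "u \<in> KK (negmod n l) \<Longrightarrow> x \<in> Amh \<Longrightarrow> rmul n u x \<in> Amh" using ksB unfolding ksubspace_def by blast

lemma dsumI: "a \<in> Ah \<Longrightarrow> b \<in> Amh \<Longrightarrow> a + b \<in> dsum Ah Amh" unfolding dsum_def by blast
lemma dsumE: "x \<in> dsum Ah Amh \<Longrightarrow> (\<And>a b. a \<in> Ah \<Longrightarrow> b \<in> Amh \<Longrightarrow> x = a + b \<Longrightarrow> P) \<Longrightarrow> P"
  unfolding dsum_def by blast

lemma nd_a: "a \<in> Ah \<Longrightarrow> a \<noteq> 0 \<Longrightarrow> \<exists>b\<in>Amh. B a b \<noteq> 0"
proof -
  assume a: "a \<in> Ah" "a \<noteq> 0"
  have "a + 0 \<in> dsum Ah Amh" by (rule dsumI[OF a(1) B0])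
  then obtain y where y: "y \<in> dsum Ah Amh" "B a y \<noteq> 0" using nd a(2) unfolding nondeg_def by auto
  obtain a2 b2 where ab: "a2 \<in> Ah" "b2 \<in> Amh" "y = a2 + b2" using dsumE[OF y(1)] by blast
  have "B a y = B a b2"
    using Bexp[OF cne Bg AJ[OF a(1)] AJ[OF ab(1)] BJ[OF B0] BJ[OF ab(2)]] ab(3) B0L[OF cne Bg] by simp
  then show ?thesis using y(2) ab(2) by auto
qed

lemma nd_b: "b \<in> Amh \<Longrightarrow> b \<noteq> 0 \<Longrightarrow> \<exists>a\<in>Ah. B a b \<noteq> 0"
proof -
  assume b: "b \<in> Amh" "b \<noteq> 0"
  have "0 + b \<in> dsum Ah Amh" by (rule dsumI[OF A0 b(1)])
  then obtain y where y: "y \<in> dsum Ah Amh" "B b y \<noteq> 0" using nd b(2) unfolding nondeg_def by auto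
  obtain a2 b2 where ab: "a2 \<in> Ah" "b2 \<in> Amh" "y = a2 + b2" using dsumE[OF y(1)] by blast
  have "B b y = B b a2"
    using Bexp[OF cne Bg AJ[OF A0] AJ[OF ab(1)] BJ[OF b(1)] BJ[OF ab(2)]] ab(3) B0L[OF cne Bg] by simp
  also have "\<dots> = inv (B a2 b)" by (rule Bherm[OF cne Bg AJ[OF ab(1)] BJ[OF b(1)]])
  finally have "B a2 b \<noteq> 0" using y(2) inv_0 by auto
  then show ?thesis using ab(1) by auto
qed

lemma span1: "{(\<Sum>i<Suc 0. rmul n (c i) (v i)) | c. \<forall>i<Suc 0. c i \<in> K} = {rmul n c (v 0) | c. c \<in> K}"
proof (rule set_eqI)
  fix x
  show "x \<in> {(\<Sum>i<Suc 0. rmul n (c i) (v i)) | c. \<forall>i<Suc 0. c i \<in> K} \<longleftrightarrow> x \<in> {rmul n c (v 0) | c. c \<in> K}"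
  proof
    assume "x \<in> {(\<Sum>i<Suc 0. rmul n (c i) (v i)) | c. \<forall>i<Suc 0. c i \<in> K}"
    then obtain c where "x = (\<Sum>i<Suc 0. rmul n (c i) (v i))" "\<forall>i<Suc 0. c i \<in> K" by blast
    then have "x = rmul n (c 0) (v 0)" "c 0 \<in> K" by auto
    then show "x \<in> {rmul n c (v 0) | c. c \<in> K}" by blast
  next
    assume "x \<in> {rmul n c (v 0) | c. c \<in> K}"
    then obtain c where c: "x = rmul n c (v 0)" "c \<in> K" by blast
    show "x \<in> {(\<Sum>i<Suc 0. rmul n (c i) (v i)) | c. \<forall>i<Suc 0. c i \<in> K}"
      by (rule CollectI, rule exI[of _ "\<lambda>_. c"]) (simp add: c)
  qed
qed

lemma iso_split: "x \<in> dsum Ah Amh \<Longrightarrow> nontrivial Ah Amh x \<Longrightarrow> isotropic B x \<Longrightarrow>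
   \<exists>a b. a \<in> Ah \<and> b \<in> Amh \<and> x = a + b \<and> a \<noteq> 0 \<and> b \<noteq> 0 \<and> B a b = 0"
proof -
  assume "nontrivial Ah Amh x" "isotropic B x"
  then obtain a b where ab: "a \<in> Ah" "b \<in> Amh" "x = a + b" "a \<noteq> 0" "b \<noteq> 0" "B x x = 0"
    unfolding nontrivial_def isotropic_def by blast
  then have "B a b = 0" using iso_iff[OF cne Bg AJ[OF ab(1)] BJ[OF ab(2)]] by simp
  then show ?thesis using ab by blast
qed

lemma partA: "ll = 1 \<or> r = 1 \<Longrightarrow> \<not> (\<exists>x\<in>dsum Ah Amh. nontrivial Ah Amh x \<and> isotropic B x)"
proof
  assume lr: "ll = 1 \<or> r = 1" and "\<exists>x\<in>dsum Ah Amh. nontrivial Ah Amh x \<and> isotropic B x"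
  then obtain x where x: "x \<in> dsum Ah Amh" "nontrivial Ah Amh x" "isotropic B x" by blast
  obtain a b where ab: "a \<in> Ah" "b \<in> Amh" "x = a + b" "a \<noteq> 0" "b \<noteq> 0" "B a b = 0"
    using iso_split[OF x] by blast
  have aJ: "a \<in> JJ l" and bJ: "b \<in> JJ (negmod n l)" using AJ[OF ab(1)] BJ[OF ab(2)] .
  show False
  proof (cases "ll = 1")
    case True
    obtain \<alpha> where \<alpha>: "\<forall>i<ll. \<alpha> i \<in> Ah" and span: "Ah = {(\<Sum>i<ll. rmul n (c i) (\<alpha> i)) | c. \<forall>i<ll. c i \<in> KK l}"
      using kdA unfolding kdim_def by blast
    have spanA: "Ah = {rmul n c (\<alpha> 0) | c. c \<in> KK l}" using span True span1[of \<alpha> "KK l"] by simp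
    have a0: "\<alpha> 0 \<in> Ah" using \<alpha> True by simp
    obtain c0 where c0: "c0 \<in> KK l" "a = rmul n c0 (\<alpha> 0)" using ab(1) spanA by blast
    have "c0 \<noteq> 0" using c0(2) ab(4) rmul_0_left by auto
    then obtain z where z: "z \<in> KK l" "rmul n z c0 = EE l" using KK_inv[OF c0(1)] by blast
    have "\<alpha> 0 = rmul n (EE l) (\<alpha> 0)" using E1J[OF cne AJ[OF a0]] by simp
    also have "\<dots> = rmul n z a" unfolding z(2)[symmetric] c0(2) by (rule rmul_assoc)
    finally have "B (\<alpha> 0) b = rmul n z (B a b)" using BlinL[OF cne Bg z(1) aJ bJ] by simp
    then have B0: "B (\<alpha> 0) b = 0" using ab(6) rmul_0 by simp
    have "\<forall>a2\<in>Ah. B a2 b = 0"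
    proof
      fix a2 assume "a2 \<in> Ah"
      then obtain c where c: "c \<in> KK l" "a2 = rmul n c (\<alpha> 0)" using spanA by blast
      show "B a2 b = 0" using BlinL[OF cne Bg c(1) AJ[OF a0] bJ] c(2) B0 rmul_0 by simp
    qed
    then show False using nd_b[OF ab(2) ab(5)] by blast
  next
    case False
    then have True: "r = 1" using lr by simp
    obtain \<beta> where \<beta>: "\<forall>i<r. \<beta> i \<in> Amh" and span: "Amh = {(\<Sum>i<r. rmul n (c i) (\<beta> i)) | c. \<forall>i<r. c i \<in> KK (negmod n l)}"
      using kdB unfolding kdim_def by blast
    have spanB: "Amh = {rmul n c (\<beta> 0) | c. c \<in> KK (negmod n l)}" using span True span1[of \<beta> "KK (negmod n l)"] by simp
    have b0: "\<beta> 0 \<in> Amh" using \<beta> True by simp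
    obtain c0 where c0: "c0 \<in> KK (negmod n l)" "b = rmul n c0 (\<beta> 0)" using ab(2) spanB by blast
    have "c0 \<noteq> 0" using c0(2) ab(5) rmul_0_left by auto
    then obtain z where z: "z \<in> KK (negmod n l)" "rmul n z c0 = EE (negmod n l)" using KK_inv[OF c0(1)] by blast
    have "\<beta> 0 = rmul n (EE (negmod n l)) (\<beta> 0)" using E2J[OF cne BJ[OF b0]] by simp
    also have "\<dots> = rmul n z b" unfolding z(2)[symmetric] c0(2) by (rule rmul_assoc)
    finally have "B a (\<beta> 0) = rmul n (inv z) (B a b)" using BlinR[OF cne Bg z(1) aJ bJ] by simp
    then have B0: "B a (\<beta> 0) = 0" using ab(6) rmul_0 by simp
    have "\<forall>b2\<in>Amh. B a b2 = 0"
    proof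
      fix b2 assume "b2 \<in> Amh"
      then obtain c where c: "c \<in> KK (negmod n l)" "b2 = rmul n c (\<beta> 0)" using spanB by blast
      show "B a b2 = 0" using BlinR[OF cne Bg c(1) aJ BJ[OF b0]] c(2) B0 rmul_0 by simp
    qed
    then show False using nd_a[OF ab(1) ab(4)] by blast
  qed
qed

end
end
end
end

context fsetup begin
context
  fixes l :: nat
  assumes cne: "cyc_coset n q l \<noteq> cyc_coset n q (negmod n l)"
begin

lemma kill1: "u \<in> KK l \<Longrightarrow> b \<in> JJ (negmod n l) \<Longrightarrow> rmul n u b = 0"
  by (rule supp_disj[OF cne KK_supp JJ_supp])
lemma kill2: "v \<in> KK (negmod n l) \<Longrightarrow> a \<in> JJ l \<Longrightarrow> rmul n v a = 0"
  by (rule supp_disj[OF cne'[OF cne] KK_supp JJ_supp])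
lemma Kid1: "u \<in> KK l \<Longrightarrow> rmul n u (EE l) = u"
  using E1J[OF cne KK_JJ] rmul_comm by metis
lemma Kid2: "u \<in> KK (negmod n l) \<Longrightarrow> rmul n u (EE (negmod n l)) = u"
  using E2J[OF cne KK_JJ] rmul_comm by metis

context
  fixes B :: "'a poly \<Rightarrow> 'a poly \<Rightarrow> 'a poly"
  assumes Bg: "Bgood B l"
begin

lemma BlinL2: "v \<in> KK (negmod n l) \<Longrightarrow> a \<in> JJ l \<Longrightarrow> b \<in> JJ (negmod n l) \<Longrightarrow> B (rmul n v b) a = rmul n v (B b a)"
proof -
  assume v: "v \<in> KK (negmod n l)" and a: "a \<in> JJ l" and b: "b \<in> JJ (negmod n l)"
  have vb: "rmul n v b \<in> JJ (negmod n l)" by (rule JJ_rmul[OF inRn_mono[OF KK_Rq[OF v]] b])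
  have "B (rmul n v b) a = inv (B a (rmul n v b))" by (rule Bherm[OF cne Bg a vb])
  also have "\<dots> = inv (rmul n (inv v) (B a b))" using BlinR[OF cne Bg v a b] by simp
  also have "\<dots> = rmul n (inv (inv v)) (inv (B a b))"
    by (rule inv_rmul[OF inv_deg KK_deg[OF BK[OF cne Bg a b]]])
  also have "\<dots> = rmul n v (B b a)" using invinvK[OF cne v] Bherm[OF cne Bg a b] by simp
  finally show ?thesis .
qed

context
  fixes Ah Amh :: "'a poly set" and ll r :: nat
  assumes ksA: "ksubspace n (KK l) (JJ l) Ah" and kdA: "kdim n (KK l) Ah ll"
    and ksB: "ksubspace n (KK (negmod n l)) (JJ (negmod n l)) Amh" and kdB: "kdim n (KK (negmod n l)) Amh r"
    and nd: "nondeg B (dsum Ah Amh)"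
begin

lemmas AJ' = AJ[OF cne Bg ksA kdA ksB kdB nd]
lemmas BJ' = BJ[OF cne Bg ksA kdA ksB kdB nd]
lemmas addA' = addA[OF cne Bg ksA kdA ksB kdB nd]
lemmas mulA' = mulA[OF cne Bg ksA kdA ksB kdB nd]
lemmas addB' = addB[OF cne Bg ksA kdA ksB kdB nd]
lemmas mulB' = mulB[OF cne Bg ksA kdA ksB kdB nd]
lemmas dsumI' = dsumI[OF cne Bg ksA kdA ksB kdB nd]
lemmas nd_a' = nd_a[OF cne Bg ksA kdA ksB kdB nd]
lemmas nd_b' = nd_b[OF cne Bg ksA kdA ksB kdB nd]

lemma iso_pair: "ll \<ge> 1 \<Longrightarrow> r \<ge> 2 \<Longrightarrow> \<exists>a b. a \<in> Ah \<and> b \<in> Amh \<and> a \<noteq> 0 \<and> b \<noteq> 0 \<and> B a b = 0"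
proof -
  assume ll: "ll \<ge> 1" and r: "r \<ge> 2"
  obtain \<alpha> where \<alpha>: "\<forall>i<ll. \<alpha> i \<in> Ah"
    and ind: "\<forall>c. (\<forall>j<ll. c j \<in> KK l) \<longrightarrow> (\<Sum>j<ll. rmul n (c j) (\<alpha> j)) = 0 \<longrightarrow> (\<forall>j<ll. c j = 0)"
    using kdA unfolding kdim_def by blast
  have aJ: "\<forall>j<ll. \<alpha> j \<in> JJ l" using \<alpha> AJ' by blast
  have a0: "\<alpha> 0 \<in> Ah" "\<alpha> 0 \<noteq> 0" using \<alpha> ll basis_nz[OF aJ ind, of 0] by auto
  obtain b where "b \<in> Amh" "b \<noteq> 0" "B (\<alpha> 0) b = 0"
    using iso_exists[OF cne Bg ksB kdB r AJ'[OF a0(1)] a0(2)] by blast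
  then show ?thesis using a0 by blast
qed

lemma partB: "2 \<le> ll \<and> 2 \<le> r \<Longrightarrow> \<exists>x\<in>dsum Ah Amh. nontrivial Ah Amh x \<and> isotropic B x"
proof -
  assume lr: "2 \<le> ll \<and> 2 \<le> r"
  obtain a b where ab: "a \<in> Ah" "b \<in> Amh" "a \<noteq> 0" "b \<noteq> 0" "B a b = 0" using iso_pair lr by fastforce
  have "a + b \<in> dsum Ah Amh" by (rule dsumI'[OF ab(1,2)])
  moreover have "nontrivial Ah Amh (a + b)" unfolding nontrivial_def using ab by blast
  moreover have "isotropic B (a + b)" unfolding isotropic_def
    using sum_nz[OF cne AJ'[OF ab(1)] BJ'[OF ab(2)] ab(3)] iso_iff[OF cne Bg AJ'[OF ab(1)] BJ'[OF ab(2)]] ab(5) by simp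
  ultimately show ?thesis by blast
qed

lemma partC: "2 \<le> ll \<and> 2 \<le> r \<Longrightarrow>
  \<exists>x\<in>dsum Ah Amh. \<exists>y\<in>dsum Ah Amh. hyperbolic_pair n B (KK l) (KK (negmod n l)) Ah Amh x y"
proof -
  assume lr: "2 \<le> ll \<and> 2 \<le> r"
  let ?E1 = "EE l" and ?E2 = "EE (negmod n l)"
  obtain a b where ab: "a \<in> Ah" "b \<in> Amh" "a \<noteq> 0" "b \<noteq> 0" "B a b = 0" using iso_pair lr by fastforce
  have aJ: "a \<in> JJ l" and bJ: "b \<in> JJ (negmod n l)" using AJ'[OF ab(1)] BJ'[OF ab(2)] .
  obtain b2 where b2: "b2 \<in> Amh" "B a b2 \<noteq> 0" using nd_a'[OF ab(1) ab(3)] by blast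
  have b2J: "b2 \<in> JJ (negmod n l)" by (rule BJ'[OF b2(1)])
  have sK: "B a b2 \<in> KK l" by (rule BK[OF cne Bg aJ b2J])
  obtain z where z: "z \<in> KK l" "rmul n z (B a b2) = ?E1" using KK_inv[OF sK b2(2)] by blast
  have izK: "inv z \<in> KK (negmod n l)" by (rule invK1[OF cne z(1)])
  let ?b' = "rmul n (inv z) b2"
  have b'A: "?b' \<in> Amh" by (rule mulB'[OF izK b2(1)])
  have b'J: "?b' \<in> JJ (negmod n l)" by (rule BJ'[OF b'A])
  have Bab': "B a ?b' = ?E1" using BlinR[OF cne Bg izK aJ b2J] invinvK[OF cne z(1)] z(2) by simp
  obtain a2 where a2: "a2 \<in> Ah" "B a2 b \<noteq> 0" using nd_b'[OF ab(2) ab(4)] by blast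
  have a2J: "a2 \<in> JJ l" by (rule AJ'[OF a2(1)])
  have s'K: "B a2 b \<in> KK l" by (rule BK[OF cne Bg a2J bJ])
  obtain z' where z': "z' \<in> KK l" "rmul n z' (B a2 b) = ?E1" using KK_inv[OF s'K a2(2)] by blast
  let ?a' = "rmul n z' a2"
  have a'A: "?a' \<in> Ah" by (rule mulA'[OF z'(1) a2(1)])
  have a'J: "?a' \<in> JJ l" by (rule AJ'[OF a'A])
  have Ba'b: "B ?a' b = ?E1" using BlinL[OF cne Bg z'(1) a2J bJ] z'(2) by simp
  let ?u = "- B ?a' ?b'"
  have uK: "?u \<in> KK l" by (rule KK_minus[OF BK[OF cne Bg a'J b'J]])
  let ?a3 = "?a' + rmul n ?u a"
  have a3A: "?a3 \<in> Ah" by (rule addA'[OF a'A mulA'[OF uK ab(1)]])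
  have a3J: "?a3 \<in> JJ l" by (rule AJ'[OF a3A])
  have Ba3b': "B ?a3 ?b' = 0"
  proof -
    have "B ?a3 ?b' = B ?a' ?b' + rmul n ?u (B a ?b')"
      using BaddL[OF cne Bg] BlinL[OF cne Bg uK aJ b'J] by simp
    also have "rmul n ?u (B a ?b') = ?u" unfolding Bab' by (rule Kid1[OF uK])
    finally show ?thesis by simp
  qed
  have Ba3b: "B ?a3 b = ?E1"
    using BaddL[OF cne Bg] BlinL[OF cne Bg uK aJ bJ] ab(5) rmul_0 Ba'b by simp
  have E1nz: "?E1 \<noteq> 0" by (rule EE_nz)
  have a3nz: "?a3 \<noteq> 0" using Ba3b E1nz B0L[OF cne Bg] by auto
  have b'nz: "?b' \<noteq> 0" using Bab' E1nz B0R[OF cne Bg] by auto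
  let ?x = "a + b" and ?y = "?a3 + ?b'"
  have xD: "?x \<in> dsum Ah Amh" by (rule dsumI'[OF ab(1,2)])
  have yD: "?y \<in> dsum Ah Amh" by (rule dsumI'[OF a3A b'A])
  have ntx: "nontrivial Ah Amh ?x" unfolding nontrivial_def using ab by blast
  have nty: "nontrivial Ah Amh ?y" unfolding nontrivial_def using a3A b'A a3nz b'nz by blast
  have isx: "isotropic B ?x" unfolding isotropic_def
    using sum_nz[OF cne aJ bJ ab(3)] iso_iff[OF cne Bg aJ bJ] ab(5) by simp
  have isy: "isotropic B ?y" unfolding isotropic_def
    using sum_nz[OF cne a3J b'J a3nz] iso_iff[OF cne Bg a3J b'J] Ba3b' by simp
  have "B ?x ?y = B a ?b' + B b ?a3" by (rule Bexp[OF cne Bg aJ a3J bJ b'J])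
  also have "B b ?a3 = inv (B ?a3 b)" by (rule Bherm[OF cne Bg a3J bJ])
  finally have "B ?x ?y = ?E1 + ?E2" using Bab' Ba3b invE1[OF cne] by simp
  then have "hyperbolic_pair n B (KK l) (KK (negmod n l)) Ah Amh ?x ?y"
    unfolding hyperbolic_pair_def ident_EE using ntx nty isx isy by blast
  then show ?thesis using xD yD by blast
qed

lemma partD: "\<forall>x\<in>dsum Ah Amh. \<forall>y\<in>dsum Ah Amh. hyperbolic_pair n B (KK l) (KK (negmod n l)) Ah Amh x y
          \<longrightarrow> nondeg B (gen_submod n (KK l) (KK (negmod n l)) x y)"
proof (intro ballI impI)
  fix x y assume "x \<in> dsum Ah Amh" "y \<in> dsum Ah Amh" and hp: "hyperbolic_pair n B (KK l) (KK (negmod n l)) Ah Amh x y"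
  let ?E1 = "EE l" and ?E2 = "EE (negmod n l)"
  obtain a b where ab: "a \<in> Ah" "b \<in> Amh" "x = a + b" "a \<noteq> 0" "b \<noteq> 0" "B x x = 0"
    using hp unfolding hyperbolic_pair_def nontrivial_def isotropic_def by blast
  obtain a' b' where ab': "a' \<in> Ah" "b' \<in> Amh" "y = a' + b'" "a' \<noteq> 0" "b' \<noteq> 0" "B y y = 0"
    using hp unfolding hyperbolic_pair_def nontrivial_def isotropic_def by blast
  have Bxy: "B x y = ?E1 + ?E2" using hp unfolding hyperbolic_pair_def ident_EE by blast
  have aJ: "a \<in> JJ l" and bJ: "b \<in> JJ (negmod n l)" using AJ'[OF ab(1)] BJ'[OF ab(2)] .
  have a'J: "a' \<in> JJ l" and b'J: "b' \<in> JJ (negmod n l)" using AJ'[OF ab'(1)] BJ'[OF ab'(2)] .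
  have Bab: "B a b = 0" using iso_iff[OF cne Bg aJ bJ] ab(3,6) by simp
  have Ba'b': "B a' b' = 0" using iso_iff[OF cne Bg a'J b'J] ab'(3,6) by simp
  have sum: "B a b' + B b a' = ?E1 + ?E2" using Bxy Bexp[OF cne Bg aJ a'J bJ b'J] ab(3) ab'(3) by simp
  have Bab': "B a b' = ?E1" by (rule compE[OF cne BK[OF cne Bg aJ b'J] BK2[OF cne Bg a'J bJ] sum])
  have Bba': "B b a' = ?E2" using sum Bab' by simp
  have Ba'b: "B a' b = ?E1"
  proof -
    have "B a' b = inv (inv (B a' b))" using invinvK[OF cne BK[OF cne Bg a'J bJ]] by simp
    also have "inv (B a' b) = ?E2" using Bherm[OF cne Bg a'J bJ] Bba' by simp
    finally show ?thesis using invE2[OF cne] by simp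
  qed
  have Bb'a: "B b' a = ?E2" using Bherm[OF cne Bg aJ b'J] Bab' invE1[OF cne] by simp
  have Bba: "B b a = 0" using Bherm[OF cne Bg aJ bJ] Bab inv_0 by simp
  have Bb'a': "B b' a' = 0" using Bherm[OF cne Bg a'J b'J] Ba'b' inv_0 by simp
  have rx: "\<And>u v. u \<in> KK l \<Longrightarrow> v \<in> KK (negmod n l) \<Longrightarrow> rmul n (u + v) x = rmul n u a + rmul n v b"
    unfolding ab(3) by (simp add: rmul_add_left rmul_add kill1[OF _ bJ] kill2[OF _ aJ])
  have ry: "\<And>u v. u \<in> KK l \<Longrightarrow> v \<in> KK (negmod n l) \<Longrightarrow> rmul n (u + v) y = rmul n u a' + rmul n v b'"
    unfolding ab'(3) by (simp add: rmul_add_left rmul_add kill1[OF _ b'J] kill2[OF _ a'J])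
  have xG: "x \<in> gen_submod n (KK l) (KK (negmod n l)) x y"
  proof -
    have eq: "x = rmul n (?E1 + ?E2) x + rmul n (0 + 0) y"
      using rx[OF EE(1) EE(1)] E1J[OF cne aJ] E2J[OF cne bJ] ab(3) rmul_0_left by simp
    show ?thesis unfolding gen_submod_def
      by (rule CollectI, rule exI[of _ "?E1"], rule exI[of _ "?E2"], rule exI[of _ 0], rule exI[of _ 0])
         (use eq EE(1) KK_0 in blast)
  qed
  have yG: "y \<in> gen_submod n (KK l) (KK (negmod n l)) x y"
  proof -
    have eq: "y = rmul n (0 + 0) x + rmul n (?E1 + ?E2) y"
      using ry[OF EE(1) EE(1)] E1J[OF cne a'J] E2J[OF cne b'J] ab'(3) rmul_0_left by simp
    show ?thesis unfolding gen_submod_def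
      by (rule CollectI, rule exI[of _ 0], rule exI[of _ 0], rule exI[of _ "?E1"], rule exI[of _ "?E2"])
         (use eq EE(1) KK_0 in blast)
  qed
  show "nondeg B (gen_submod n (KK l) (KK (negmod n l)) x y)"
    unfolding nondeg_def
  proof (intro ballI impI)
    fix w assume wG: "w \<in> gen_submod n (KK l) (KK (negmod n l)) x y" and wnz: "w \<noteq> 0"
    obtain u v u' v' where uv: "u \<in> KK l" "v \<in> KK (negmod n l)" "u' \<in> KK l" "v' \<in> KK (negmod n l)"
      and w: "w = rmul n (u + v) x + rmul n (u' + v') y"
      using wG unfolding gen_submod_def by blast
    let ?A = "rmul n u a + rmul n u' a'" and ?Bm = "rmul n v b + rmul n v' b'"
    have w2: "w = ?A + ?Bm" unfolding w rx[OF uv(1,2)] ry[OF uv(3,4)] by (simp add: ac_simps)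
    have uaJ: "rmul n u a \<in> JJ l" and ua'J: "rmul n u' a' \<in> JJ l"
      using AJ'[OF mulA'[OF uv(1) ab(1)]] AJ'[OF mulA'[OF uv(3) ab'(1)]] .
    have vbJ: "rmul n v b \<in> JJ (negmod n l)" and vb'J: "rmul n v' b' \<in> JJ (negmod n l)"
      using BJ'[OF mulB'[OF uv(2) ab(2)]] BJ'[OF mulB'[OF uv(4) ab'(2)]] .
    have AJ: "?A \<in> JJ l" using AJ'[OF addA'[OF mulA'[OF uv(1) ab(1)] mulA'[OF uv(3) ab'(1)]]] .
    have BmJ: "?Bm \<in> JJ (negmod n l)" using BJ'[OF addB'[OF mulB'[OF uv(2) ab(2)] mulB'[OF uv(4) ab'(2)]]] .
    have Bwx: "B w x = u' + v'"
    proof -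
      have "B w x = B ?A b + B ?Bm a" unfolding w2 ab(3) by (rule Bexp[OF cne Bg AJ aJ BmJ bJ])
      also have "B ?A b = rmul n u (B a b) + rmul n u' (B a' b)"
        using BaddL[OF cne Bg] BlinL[OF cne Bg uv(1) aJ bJ] BlinL[OF cne Bg uv(3) a'J bJ] by simp
      also have "\<dots> = u'" using Bab Ba'b rmul_0 Kid1[OF uv(3)] by simp
      also have "B ?Bm a = rmul n v (B b a) + rmul n v' (B b' a)"
        using BaddL[OF cne Bg] BlinL2[OF uv(2) aJ bJ] BlinL2[OF uv(4) aJ b'J] by simp
      also have "\<dots> = v'" using Bba Bb'a rmul_0 Kid2[OF uv(4)] by simp
      finally show ?thesis .
    qed
    have Bwy: "B w y = u + v"
    proof -
      have "B w y = B ?A b' + B ?Bm a'" unfolding w2 ab'(3) by (rule Bexp[OF cne Bg AJ a'J BmJ b'J])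
      also have "B ?A b' = rmul n u (B a b') + rmul n u' (B a' b')"
        using BaddL[OF cne Bg] BlinL[OF cne Bg uv(1) aJ b'J] BlinL[OF cne Bg uv(3) a'J b'J] by simp
      also have "\<dots> = u" using Bab' Ba'b' rmul_0 Kid1[OF uv(1)] by simp
      also have "B ?Bm a' = rmul n v (B b a') + rmul n v' (B b' a')"
        using BaddL[OF cne Bg] BlinL2[OF uv(2) a'J bJ] BlinL2[OF uv(4) a'J b'J] by simp
      also have "\<dots> = v" using Bba' Bb'a' rmul_0 Kid2[OF uv(2)] by simp
      finally show ?thesis .
    qed
    show "\<exists>y'\<in>gen_submod n (KK l) (KK (negmod n l)) x y. B w y' \<noteq> 0"
    proof (rule ccontr)
      assume "\<not> (\<exists>y'\<in>gen_submod n (KK l) (KK (negmod n l)) x y. B w y' \<noteq> 0)"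
      then have "B w x = 0" "B w y = 0" using xG yG by blast+
      then have s1: "u' + v' = 0" and s2: "u + v = 0" using Bwx Bwy by simp_all
      have "u' = 0" by (rule comp0[OF cne uv(3) uv(4) s1])
      moreover have "u = 0" by (rule comp0[OF cne uv(1) uv(2) s2])
      ultimately have "v' = 0" "v = 0" using s1 s2 by simp_all
      then have "w = 0" using \<open>u' = 0\<close> \<open>u = 0\<close> unfolding w by (simp add: rmul_0_left)
      then show False using wnz by simp
    qed
  qed
qed

end
end
end
end

context fsetup begin

lemma gamma_half:
  assumes ev: "even t" and g: "g + g ^ (q ^ (2 ^ (multiplicity 2 t - 1))) = 0"
  shows "g ^ (q ^ (t div 2)) = - (g::'a)"
proof -
  let ?e = "multiplicity 2 t"
  have tnz: "t \<noteq> 0" using t2 by simp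
  obtain m where m: "t = 2 ^ ?e * m" "\<not> 2 dvd m"
    using multiplicity_decompose'[OF tnz, of 2] by auto
  have e1: "?e > 0" using multiplicity_gt_zero_iff[OF tnz, of 2] ev by simp
  have td: "t div 2 = 2 ^ (?e - 1) * m"
  proof -
    have "(2::nat) ^ ?e = 2 * 2 ^ (?e - 1)" using e1 by (metis Suc_diff_1 power_Suc)
    then have "t = 2 * (2 ^ (?e - 1) * m)" using m(1) by simp
    then show ?thesis by simp
  qed
  let ?w = "2 ^ (?e - 1)"
  have g1: "g ^ (q ^ ?w) = - g" using g by (simp add: eq_neg_iff_add_eq_0 add.commute)
  have it: "g ^ (q ^ (?w * j)) = (if even j then g else - g)" for j
  proof (induction j)
    case 0 then show ?case by simp
  next
    case (Suc j)
    have "g ^ (q ^ (?w * Suc j)) = (g ^ (q ^ (?w * j))) ^ (q ^ ?w)"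
      by (simp add: power_add power_mult[symmetric] mult.commute)
    also have "\<dots> = (if even j then - g else g)"
      using Suc g1 fr_uminus[of g ?w] by simp
    finally show ?case by simp
  qed
  show ?thesis using it[of m] m(2) td by simp
qed

end
theorem lemma3p5:
  fixes \<eta> \<gamma> :: "'a::{field,finite}"
    and \<theta> :: "'a poly"
    and p k q N n t lh l r :: nat
    and \<delta> :: delta
    and Ah Amh :: "'a poly set"
  defines "Kh \<equiv> Kideal \<eta> n q lh"
    and "Kmh \<equiv> Kideal \<eta> n q (negmod n lh)"
    and "Jh \<equiv> Jideal \<eta> n q t lh"
    and "Jmh \<equiv> Jideal \<eta> n q t (negmod n lh)"
    and "B \<equiv> form_delta \<delta> n q t \<gamma> \<theta>"
  assumes "prime p" and "k \<ge> 1" and "q = p ^ k"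
    and "N \<ge> 1" and "t dvd N" and "card (UNIV :: 'a set) = q ^ N"
    and "n \<ge> 1" and "coprime n q" and "t \<ge> 2"
    and "primitive_root n \<eta>"
    and "lh < n"
    \<comment> \<open>h belongs to M: h lies in a 2-cycle of mu\<close>
    and "cyc_coset n q lh \<noteq> cyc_coset n q (negmod n lh)"
    and "t \<in> Tset \<delta> p"
    and "\<delta> = DGammaH \<Longrightarrow>
           \<gamma> \<noteq> 0 \<and> \<gamma> \<in> subF (q ^ (2 ^ multiplicity 2 t))
           \<and> \<gamma> + \<gamma> ^ (q ^ (2 ^ (multiplicity 2 t - 1))) = 0
           \<and> \<theta> \<in> Kh \<and> \<theta> \<noteq> 0"
    and "ksubspace n Kh Jh Ah" and "kdim n Kh Ah l"
    and "ksubspace n Kmh Jmh Amh" and "kdim n Kmh Amh r"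
    and "nondeg B (dsum Ah Amh)"
  shows
    "((l = 1 \<or> r = 1) \<longrightarrow>
        \<not> (\<exists>x\<in>dsum Ah Amh. nontrivial Ah Amh x \<and> isotropic B x))
     \<and> ((l \<ge> 2 \<and> r \<ge> 2) \<longrightarrow>
        (\<exists>x\<in>dsum Ah Amh. nontrivial Ah Amh x \<and> isotropic B x))
     \<and> ((l \<ge> 2 \<and> r \<ge> 2) \<longrightarrow>
        (\<exists>x\<in>dsum Ah Amh. \<exists>y\<in>dsum Ah Amh. hyperbolic_pair n B Kh Kmh Ah Amh x y))
     \<and> (\<forall>x\<in>dsum Ah Amh. \<forall>y\<in>dsum Ah Amh. hyperbolic_pair n B Kh Kmh Ah Amh x y
          \<longrightarrow> nondeg B (gen_submod n Kh Kmh x y))"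
proof -
  interpret F: fsetup \<eta> p k q N n t
    by unfold_locales (use assms(6-15) in auto)
  have cne: "cyc_coset n q lh \<noteq> cyc_coset n q (negmod n lh)" by (rule assms(17))
  have Bg: "F.Bgood B lh"
  proof (cases \<delta>)
    case DStar
    then have "B = form_star n q t" unfolding assms(5) form_delta_def by simp
    then show ?thesis using F.Bgood_star[OF cne] by simp
  next
    case DZero
    then have "B = form0 n q t" unfolding assms(5) form_delta_def by simp
    then show ?thesis using F.Bgood0[OF cne] by simp
  next
    case DGammaH
    then have Bd: "B = form_gammaH n q t \<gamma> \<theta>" unfolding assms(5) form_delta_def by simp
    have ev: "even t" using assms(18) DGammaH unfolding Tset_def by simp
    have gp: "\<gamma> + \<gamma> ^ (q ^ (2 ^ (multiplicity 2 t - 1))) = 0" and th: "\<theta> \<in> Kh"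
      using assms(19) DGammaH by auto
    have gs: "\<gamma> ^ (q ^ (t div 2)) = - \<gamma>" by (rule F.gamma_half[OF ev gp])
    have th': "\<theta> \<in> Kideal \<eta> n q lh" using th unfolding assms(1) .
    show ?thesis unfolding Bd by (rule F.Bgood_gammaH[OF cne ev gs th'])
  qed
  have ksA: "ksubspace n (Kideal \<eta> n q lh) (Jideal \<eta> n q t lh) Ah" using assms(20) unfolding assms(1) assms(3) .
  have kdA: "kdim n (Kideal \<eta> n q lh) Ah l" using assms(21) unfolding assms(1) .
  have ksB: "ksubspace n (Kideal \<eta> n q (negmod n lh)) (Jideal \<eta> n q t (negmod n lh)) Amh"
    using assms(22) unfolding assms(2) assms(4) .
  have kdB: "kdim n (Kideal \<eta> n q (negmod n lh)) Amh r" using assms(23) unfolding assms(2) .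
  have nd: "nondeg B (dsum Ah Amh)" by (rule assms(24))
  note A = F.partA[OF cne Bg ksA kdA ksB kdB nd]
  note Bp = F.partB[OF cne Bg ksA kdA ksB kdB nd]
  note C = F.partC[OF cne Bg ksA kdA ksB kdB nd]
  note D = F.partD[OF cne Bg ksA kdA ksB kdB nd]
  show ?thesis unfolding assms(1) assms(2) using A Bp C D by blast
qed


end
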